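(* Let $(\Gamma,x)\subset\Sigma$, $\lambda$, $\omega$, $D^{1/2}$, $\varepsilon$, $\mathcal L$ and the maps $S$, $T$, $T'$ be as in the context. Then $S\colon\mathbb C^\diamondsuit\to\mathcal L$, $T\colon\mathbb C^\diamondsuit\to\mathbb R^B$ and $T'\colon\mathbb C^\diamondsuit\to T'(\mathbb C^\diamondsuit)\subset\mathbb C^B$ are $\mathbb R$-linear isomorphisms, and for every $F\in\mathbb C^\diamondsuit$ the following are equivalent: (i) $\exp(i\pi/4)F$ is s-holomorphic around every vertex of $\Gamma$; (ii) $S(F)$ lies in the kernel of the Kac–Ward operator $\mathit{KW}(\Gamma,x)$; (iii) $T(F)$ lies in the kernel of the real Kasteleyn operator $\mathrm K^\omega(C_\Gamma,y)\colon\mathbb R^B\to\mathbb R^W$. Furthermore, if $\Gamma$ is isoradially embedded in a flat surface $\Sigma$ with critical weights, these conditions are also equivalent to: (iv) $T'(F)$ lies in the kernel of the discrete $\bar\partial$-operator $\bar\partial^{\varphi_\omega}_C$.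
   Context: Let $\Sigma$ be a closed connected oriented surface with a Riemannian metric, $\Gamma\subset\Sigma$ a finite connected graph with smoothly embedded edges whose faces are discs, with weights $x_e=\tan(\theta_e/2)$, $\theta_e\in[0,\pi/2]$. $\mathbb E$: oriented edges (origin $o$, terminus $t$, reversal $\bar e$), $z_e=z_{\bar e}$ midpoint, $\diamondsuit=\{z_e\}$, $\theta_{\bar e}=\theta_e$, $\mathbb E_v$ edges with origin $v$. Fix a vector field $\lambda$ with isolated zeros of even index in $\Sigma\setminus\Gamma$; $\alpha_\lambda(e,e')$ ($o(e')=t(e)$, $e'\ne\bar e$) is the rotation angle relative to $\lambda$ of the velocity along $e$ from $z_e$ to $t(e)$ then $e'$ to $z_{e'}$. $\mathit{KW}(\Gamma,x)$: $(\mathit{KW}f)(e)=f(e)-x_e\sum_{e'\in\mathbb E_{t(e)},e'\ne\bar e}e^{\frac i2\alpha_\lambda(e,e')}f(e')$. $a_e$: oriented angle at $z_e$ from $\lambda$ to $e$, $D_e=e^{ia_e}$; $R(e)$: next element of $\mathbb E_{o(e)}$ counterclockwise; $\beta_e=\pi+\alpha_\lambda(\bar e,R(e))$, $q_e=e^{i\beta_e/2}$. $\Pr(\cdot;u)$ is orthogonal projection of $\mathbb C$ onto $u\mathbb R$. s-holomorphicity: $G\in\mathbb C^\diamondsuit$ is s-holomorphic around $v$ if for all $e\in\mathbb E_v$, with $e'=R(e)$, $\Pr\big(G(z_e);[ie^{i(a_e+\theta_e)}]^{-1/2}\big)=\Pr\big(G(z_{e'});[ie^{i(a_{e'}-\theta_{e'})}]^{-1/2}\big)\exp(\tfrac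 i2(\beta_e-\theta_e-\theta_{e'}))$ (choice of square roots irrelevant). $C_\Gamma$: each edge replaced by a rectangle; for each orientation $e$, the vertex near $o(e)$ right of $e$ is black $\psi_B(e)$, the one near $o(e)$ left of $e$ is white $\psi_W(e)$; edges $\{\psi_W(e),\psi_B(e)\}$ weight $\cos\theta_e$, $\{\psi_W(e),\psi_B(\bar e)\}$ weight $\sin\theta_e$, corner edges $\{\psi_W(e),\psi_B(R(e))\}$ weight $1$; $B,W$ black/white sets. A Kasteleyn orientation $\omega\colon E(C_\Gamma)\to\{\pm1\}$ satisfies $\prod_{\partial f}\omega=(-1)^{|\partial f|/2+1}$ on each face $f$ of $C_\Gamma$; $\mathrm K^\omega\colon\mathbb R^B\to\mathbb R^W$, $(\mathrm K^\omega g)(w)=\sum_{b\sim w}\omega(w,b)y_{wb}g(b)$. Fix $\omega$ and square roots $D_e^{1/2}$ of $D_e$ such that $\mathit{KW}(\Gamma,x)\circ(I-qR)\circ D^{-1/2}\circ\psi_B=(I-ixJ)\circ D^{-1/2}\circ\psi_W\circ\mathrm K^\omega$ on $\mathbb C^B$ (such a pair exists), where $(Jf)(e)=f(\bar e)$, $(Rf)(e)=f(R(e))$, $q,x,D^{-1/2}=(D^{1/2})^{-1}$ act diagonally, $(\psi_Bg)(e)=g(\psi_B(e))$, $(\psi_Wh)(e)=h(\psi_W(e))$. Then $D^{1/2}_{R(e)}=\varepsilon(e)q_eD_e^{1/2}$ with $\varepsilon(e)\in\{\pm1\}$. Maps: $\mathcal L=\{f\in\mathbb C^{\mathbb E}: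 f(e)\in e^{-\frac i2a_e}\mathbb R\ \forall e\}$; $(SF)(e)=\sin(\theta_e/2)\Pr(F(z_e);e^{-\frac i2a_e})$. For $b=\psi_B(e_0)$, $v=o(e_0)$: $(TF)(b)=\sum_{e\in\mathbb E_v}\mathrm{Re}\big(\varepsilon_b(e)D_e^{1/2}\sin(\theta_e/2)F(z_e)\big)$, where $\varepsilon_b(R^k(e_0))=\varepsilon(e_0)\varepsilon(R(e_0))\cdots\varepsilon(R^{k-1}(e_0))$ for $0\le k<\deg v$ (empty product $=1$). $(T'F)(b)=e^{\frac i2\theta_{e_0}}(TF)(b)$. Isoradial case: $\Sigma$ is flat with conical singularities, obtained by gluing rhombi of common side $\delta$ whose distinguished diagonals form $\Gamma$, all cone angles odd multiples of $2\pi$; $\theta_e$ is the half-rhombus angle of $e$ and $x_e=\tan(\theta_e/2)$ (critical weights). Discrete $\bar\partial$ on $C_\Gamma$ for a cochain $\varphi$: for $w=\psi_W(e)$, $b_1=\psi_B(e)$, $b_2=\psi_B(\bar e)$, $b_3=\psi_B(R(e))$, $(\bar\partial^\varphi_Cg)(w)=\sin(2\theta_e)^{-1}\big(\varphi(w,b_1)\cos\theta_e g(b_1)+i\varphi(w,b_2)\sin\theta_e g(b_2)-e^{i\theta_e}\varphi(w,b_3)g(b_3)\big)$. $\varphi_\omega$ is the $S^1$-valued cochain (the discrete spin structure associated with $\omega$) given by $\varphi_\omega(w,b_1)=\omega(w,b_1)$, $\varphi_\omega(w,b_2)=-i\,\omega(w,b_2)$, $\varphi_\omega(w,b_3)=-\exp(-\tfrac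 i2(\theta_e+\theta_{R(e)}))\omega(w,b_3)$. *)

theory Defs
  imports Complex_Main
begin

text \<open>
Combinatorial/angle model of a graph Gamma cellularly embedded in a closed oriented surface.
Oriented edges form a finite set E of type 'e; rv is the reversal e -> bar e, org the origin,
R the counterclockwise successor in E_{o(e)}. The black vertex psi_B(e) and the white vertex
psi_W(e) of C_Gamma are identified with the oriented edge e, so R^B = R^W = functions on E.
The midpoint z_e is represented by the two-element set {e, bar e}.
\<close>

definition tgt :: "('e \<Rightarrow> 'e) \<Rightarrow> ('e \<Rightarrow> 'v) \<Rightarrow> 'e \<Rightarrow> 'v" where
  "tgt rv org e = org (rv e)"

definition Ev :: "'e set \<Rightarrow> ('e \<Rightarrow> 'v) \<Rightarrow> 'v \<Rightarrow> 'e set" where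
  "Ev E org v = {e \<in> E. org e = v}"

definition deg :: "'e set \<Rightarrow> ('e \<Rightarrow> 'v) \<Rightarrow> 'v \<Rightarrow> nat" where
  "deg E org v = card (Ev E org v)"

definition orbit :: "('e \<Rightarrow> 'e) \<Rightarrow> 'e \<Rightarrow> 'e set" where
  "orbit f e = {(f ^^ k) e | k. True}"

definition zmid :: "('e \<Rightarrow> 'e) \<Rightarrow> 'e \<Rightarrow> 'e set" where
  "zmid rv e = {e, rv e}"

definition Diam :: "'e set \<Rightarrow> ('e \<Rightarrow> 'e) \<Rightarrow> 'e set set" where
  "Diam E rv = zmid rv ` E"

text \<open>Finite connected graph given by a rotation system (surface and faces are then determined;
faces are orbits of rv o R).\<close>
definition rotation_system :: "'e set \<Rightarrow> ('e \<Rightarrow> 'e) \<Rightarrow> ('e \<Rightarrow> 'v) \<Rightarrow> ('e \<Rightarrow> 'e) \<Rightarrow> bool" where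
  "rotation_system E rv org R \<longleftrightarrow>
     finite E \<and>
     (\<forall>e\<in>E. rv e \<in> E \<and> rv (rv e) = e \<and> rv e \<noteq> e) \<and>
     (\<forall>e\<in>E. R e \<in> E \<and> org (R e) = org e) \<and>
     (\<forall>e\<in>E. orbit R e = Ev E org (org e)) \<and>
     (\<forall>e\<in>E. \<forall>e'\<in>E. (e, e') \<in> ({(y, R y) | y. y \<in> E} \<union> {(y, rv y) | y. y \<in> E})\<^sup>*)"

definition weights_ok :: "'e set \<Rightarrow> ('e \<Rightarrow> 'e) \<Rightarrow> ('e \<Rightarrow> real) \<Rightarrow> bool" where
  "weights_ok E rv \<theta> \<longleftrightarrow> (\<forall>e\<in>E. 0 < \<theta> e \<and> \<theta> e \<le> pi / 2 \<and> \<theta> (rv e) = \<theta> e)"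

definition xw :: "('e \<Rightarrow> real) \<Rightarrow> 'e \<Rightarrow> real" where
  "xw \<theta> e = tan (\<theta> e / 2)"

definition cong2pi :: "real \<Rightarrow> real \<Rightarrow> bool" where
  "cong2pi x y \<longleftrightarrow> (\<exists>n::int. x - y = 2 * pi * of_int n)"

text \<open>Angle data induced by the Riemannian metric and the vector field lambda:
  c e   = (Riemannian) angle at o(e) from e counterclockwise to R(e);
  rho e = rotation angle relative to lambda of the velocity along e from z_e to t(e);
  a e   = oriented angle at z_e from lambda to e.\<close>
definition angle_data :: "'e set \<Rightarrow> ('e \<Rightarrow> 'e) \<Rightarrow> ('e \<Rightarrow> 'v) \<Rightarrow> ('e \<Rightarrow> 'e)
    \<Rightarrow> ('e \<Rightarrow> real) \<Rightarrow> ('e \<Rightarrow> real) \<Rightarrow> ('e \<Rightarrow> real) \<Rightarrow> bool" where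
  "angle_data E rv org R c rho a \<longleftrightarrow>
     (\<forall>e\<in>E. 0 < c e) \<and>
     (\<forall>e\<in>E. (\<Sum>e'\<in>Ev E org (org e). c e') = 2 * pi) \<and>
     (\<forall>e\<in>E. cong2pi (a (rv e)) (a e + pi)) \<and>
     (\<forall>e\<in>E. cong2pi (a (R e) + rho (rv (R e))) (a e + rho (rv e) + c e))"

definition corner_idx :: "('e \<Rightarrow> 'e) \<Rightarrow> 'e \<Rightarrow> 'e \<Rightarrow> nat" where
  "corner_idx R e e' = (LEAST k. 0 < k \<and> (R ^^ k) e = e')"

text \<open>alpha_lambda(e,e') for o(e') = t(e): rotation along e from z_e to t(e), turning angle at the
vertex (ccw angle from bar e to e' minus pi), rotation along e' from o(e') to z_e'.\<close>
definition alpha :: "('e \<Rightarrow> 'e) \<Rightarrow> ('e \<Rightarrow> 'e) \<Rightarrow> ('e \<Rightarrow> real) \<Rightarrow> ('e \<Rightarrow> real) \<Rightarrow> 'e \<Rightarrow> 'e \<Rightarrow> real" where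
  "alpha rv R c rho e e' =
     rho e - rho (rv e') + (\<Sum>j<corner_idx R (rv e) e'. c ((R ^^ j) (rv e))) - pi"

definition beta :: "('e \<Rightarrow> 'e) \<Rightarrow> ('e \<Rightarrow> 'e) \<Rightarrow> ('e \<Rightarrow> real) \<Rightarrow> ('e \<Rightarrow> real) \<Rightarrow> 'e \<Rightarrow> real" where
  "beta rv R c rho e = pi + alpha rv R c rho (rv e) (R e)"

definition qf :: "('e \<Rightarrow> 'e) \<Rightarrow> ('e \<Rightarrow> 'e) \<Rightarrow> ('e \<Rightarrow> real) \<Rightarrow> ('e \<Rightarrow> real) \<Rightarrow> 'e \<Rightarrow> complex" where
  "qf rv R c rho e = exp (\<i> * of_real (beta rv R c rho e / 2))"

definition Pr :: "complex \<Rightarrow> complex \<Rightarrow> complex" where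
  "Pr z u = of_real (Re (z * cnj u) / (cmod u)\<^sup>2) * u"

definition KW :: "'e set \<Rightarrow> ('e \<Rightarrow> 'e) \<Rightarrow> ('e \<Rightarrow> 'v) \<Rightarrow> ('e \<Rightarrow> 'e) \<Rightarrow> ('e \<Rightarrow> real)
    \<Rightarrow> ('e \<Rightarrow> real) \<Rightarrow> ('e \<Rightarrow> real) \<Rightarrow> ('e \<Rightarrow> complex) \<Rightarrow> 'e \<Rightarrow> complex" where
  "KW E rv org R c rho \<theta> f e =
     f e - of_real (xw \<theta> e) *
       (\<Sum>e'\<in>{e' \<in> E. org e' = tgt rv org e \<and> e' \<noteq> rv e}.
          exp (\<i> * of_real (alpha rv R c rho e e' / 2)) * f e')"

text \<open>Kasteleyn operator K^omega on C_Gamma: the white vertex psi_W(e) is adjacent to psi_B(e)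
(weight cos theta_e, sign wc e), psi_B(bar e) (weight sin theta_e, sign ws e) and psi_B(R e)
(weight 1, sign wr e).\<close>
definition Kast :: "('e \<Rightarrow> 'e) \<Rightarrow> ('e \<Rightarrow> 'e) \<Rightarrow> ('e \<Rightarrow> real) \<Rightarrow> ('e \<Rightarrow> real) \<Rightarrow> ('e \<Rightarrow> real)
    \<Rightarrow> ('e \<Rightarrow> real) \<Rightarrow> ('e \<Rightarrow> 'a::real_algebra_1) \<Rightarrow> 'e \<Rightarrow> 'a" where
  "Kast rv R \<theta> wc ws wr g e =
     of_real (wc e * cos (\<theta> e)) * g e + of_real (ws e * sin (\<theta> e)) * g (rv e)
     + of_real (wr e) * g (R e)"

text \<open>Kasteleyn condition on the faces of C_Gamma: edge rectangles, vertex polygons (orbits of R),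
face polygons (orbits of rv o R).\<close>
definition kasteleyn :: "'e set \<Rightarrow> ('e \<Rightarrow> 'e) \<Rightarrow> ('e \<Rightarrow> 'e) \<Rightarrow> ('e \<Rightarrow> real) \<Rightarrow> ('e \<Rightarrow> real)
    \<Rightarrow> ('e \<Rightarrow> real) \<Rightarrow> bool" where
  "kasteleyn E rv R wc ws wr \<longleftrightarrow>
     (\<forall>e\<in>E. wc e \<in> {-1, 1} \<and> ws e \<in> {-1, 1} \<and> wr e \<in> {-1, 1}) \<and>
     (\<forall>e\<in>E. wc e * ws e * wc (rv e) * ws (rv e) = -1) \<and>
     (\<forall>e\<in>E. (\<Prod>e'\<in>orbit R e. wc e' * wr e') = (-1) ^ (card (orbit R e) + 1)) \<and>
     (\<forall>e\<in>E. (\<Prod>e'\<in>orbit (rv \<circ> R) e. ws e' * wr e') = (-1) ^ (card (orbit (rv \<circ> R) e) + 1))"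

text \<open>The operator identity KW o (I - qR) o D^{-1/2} o psi_B = (I - i x J) o D^{-1/2} o psi_W o K
on C^B, where Dh e is the chosen square root D_e^{1/2}.\<close>
definition KW_factorization :: "'e set \<Rightarrow> ('e \<Rightarrow> 'e) \<Rightarrow> ('e \<Rightarrow> 'v) \<Rightarrow> ('e \<Rightarrow> 'e) \<Rightarrow> ('e \<Rightarrow> real)
    \<Rightarrow> ('e \<Rightarrow> real) \<Rightarrow> ('e \<Rightarrow> real) \<Rightarrow> ('e \<Rightarrow> complex) \<Rightarrow> ('e \<Rightarrow> real) \<Rightarrow> ('e \<Rightarrow> real)
    \<Rightarrow> ('e \<Rightarrow> real) \<Rightarrow> bool" where
  "KW_factorization E rv org R c rho \<theta> Dh wc ws wr \<longleftrightarrow>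
     (\<forall>g :: 'e \<Rightarrow> complex. \<forall>e\<in>E.
        KW E rv org R c rho \<theta> (\<lambda>e'. g e' / Dh e' - qf rv R c rho e' * (g (R e') / Dh (R e'))) e
        = Kast rv R \<theta> wc ws wr g e / Dh e
          - \<i> * of_real (xw \<theta> e) * (Kast rv R \<theta> wc ws wr g (rv e) / Dh (rv e)))"

definition eps :: "('e \<Rightarrow> 'e) \<Rightarrow> ('e \<Rightarrow> 'e) \<Rightarrow> ('e \<Rightarrow> real) \<Rightarrow> ('e \<Rightarrow> real) \<Rightarrow> ('e \<Rightarrow> complex)
    \<Rightarrow> 'e \<Rightarrow> complex" where
  "eps rv R c rho Dh e = Dh (R e) / (qf rv R c rho e * Dh e)"

definition epsb :: "('e \<Rightarrow> 'e) \<Rightarrow> ('e \<Rightarrow> 'e) \<Rightarrow> ('e \<Rightarrow> real) \<Rightarrow> ('e \<Rightarrow> real) \<Rightarrow> ('e \<Rightarrow> complex)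
    \<Rightarrow> 'e \<Rightarrow> nat \<Rightarrow> complex" where
  "epsb rv R c rho Dh e0 k = (\<Prod>j<k. eps rv R c rho Dh ((R ^^ j) e0))"

text \<open>The spaces C^diamond, L and R^B (functions vanishing off their index sets).\<close>
definition DiamSp :: "'e set \<Rightarrow> ('e \<Rightarrow> 'e) \<Rightarrow> ('e set \<Rightarrow> complex) set" where
  "DiamSp E rv = {F. \<forall>z. z \<notin> Diam E rv \<longrightarrow> F z = 0}"

definition Lsp :: "'e set \<Rightarrow> ('e \<Rightarrow> real) \<Rightarrow> ('e \<Rightarrow> complex) set" where
  "Lsp E a = {f. (\<forall>e\<in>E. \<exists>r::real. f e = exp (- (\<i> * of_real (a e / 2))) * of_real r)
                 \<and> (\<forall>e. e \<notin> E \<longrightarrow> f e = 0)}"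

definition RB :: "'e set \<Rightarrow> ('e \<Rightarrow> real) set" where
  "RB E = {g. \<forall>e. e \<notin> E \<longrightarrow> g e = 0}"

definition Smap :: "'e set \<Rightarrow> ('e \<Rightarrow> 'e) \<Rightarrow> ('e \<Rightarrow> real) \<Rightarrow> ('e \<Rightarrow> real)
    \<Rightarrow> ('e set \<Rightarrow> complex) \<Rightarrow> 'e \<Rightarrow> complex" where
  "Smap E rv \<theta> a F e =
     (if e \<in> E then of_real (sin (\<theta> e / 2)) * Pr (F (zmid rv e)) (exp (- (\<i> * of_real (a e / 2))))
      else 0)"

definition Tmap :: "'e set \<Rightarrow> ('e \<Rightarrow> 'e) \<Rightarrow> ('e \<Rightarrow> 'v) \<Rightarrow> ('e \<Rightarrow> 'e) \<Rightarrow> ('e \<Rightarrow> real)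
    \<Rightarrow> ('e \<Rightarrow> real) \<Rightarrow> ('e \<Rightarrow> real) \<Rightarrow> ('e \<Rightarrow> complex) \<Rightarrow> ('e set \<Rightarrow> complex) \<Rightarrow> 'e \<Rightarrow> real" where
  "Tmap E rv org R c rho \<theta> Dh F e0 =
     (if e0 \<in> E then
        (\<Sum>k<deg E org (org e0).
           Re (epsb rv R c rho Dh e0 k * Dh ((R ^^ k) e0) * of_real (sin (\<theta> ((R ^^ k) e0) / 2))
               * F (zmid rv ((R ^^ k) e0))))
      else 0)"

definition T'map :: "'e set \<Rightarrow> ('e \<Rightarrow> 'e) \<Rightarrow> ('e \<Rightarrow> 'v) \<Rightarrow> ('e \<Rightarrow> 'e) \<Rightarrow> ('e \<Rightarrow> real)
    \<Rightarrow> ('e \<Rightarrow> real) \<Rightarrow> ('e \<Rightarrow> real) \<Rightarrow> ('e \<Rightarrow> complex) \<Rightarrow> ('e set \<Rightarrow> complex) \<Rightarrow> 'e \<Rightarrow> complex" where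
  "T'map E rv org R c rho \<theta> Dh F e0 =
     exp (\<i> * of_real (\<theta> e0 / 2)) * of_real (Tmap E rv org R c rho \<theta> Dh F e0)"

definition rlin_iso :: "(('a \<Rightarrow> 'b::real_vector) \<Rightarrow> ('c \<Rightarrow> 'd::real_vector))
    \<Rightarrow> ('a \<Rightarrow> 'b) set \<Rightarrow> ('c \<Rightarrow> 'd) set \<Rightarrow> bool" where
  "rlin_iso f A B \<longleftrightarrow> bij_betw f A B \<and>
     (\<forall>x\<in>A. \<forall>y\<in>A. f (\<lambda>z. x z + y z) = (\<lambda>w. f x w + f y w)) \<and>
     (\<forall>x\<in>A. \<forall>r::real. f (\<lambda>z. r *\<^sub>R x z) = (\<lambda>w. r *\<^sub>R f x w))"

text \<open>s-holomorphicity around v (square roots [i e^{i phi}]^{-1/2} := e^{-i(pi/2+phi)/2}).\<close>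
definition sholo_at :: "'e set \<Rightarrow> ('e \<Rightarrow> 'e) \<Rightarrow> ('e \<Rightarrow> 'v) \<Rightarrow> ('e \<Rightarrow> 'e) \<Rightarrow> ('e \<Rightarrow> real)
    \<Rightarrow> ('e \<Rightarrow> real) \<Rightarrow> ('e \<Rightarrow> real) \<Rightarrow> ('e \<Rightarrow> real) \<Rightarrow> ('e set \<Rightarrow> complex) \<Rightarrow> 'v \<Rightarrow> bool" where
  "sholo_at E rv org R c rho \<theta> a G v \<longleftrightarrow>
     (\<forall>e\<in>E. org e = v \<longrightarrow>
        Pr (G (zmid rv e)) (exp (- (\<i> * of_real ((pi / 2 + a e + \<theta> e) / 2))))
        = Pr (G (zmid rv (R e))) (exp (- (\<i> * of_real ((pi / 2 + a (R e) - \<theta> (R e)) / 2))))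
          * exp (\<i> * of_real ((beta rv R c rho e - \<theta> e - \<theta> (R e)) / 2)))"

text \<open>Isoradial embedding with critical weights: theta_e is the half-rhombus angle; rhombi are
non-degenerate and all cone angles (at primal vertices and at dual vertices = faces of Gamma,
i.e. orbits of rv o R) are odd multiples of 2 pi.\<close>
definition isoradial :: "'e set \<Rightarrow> ('e \<Rightarrow> 'e) \<Rightarrow> ('e \<Rightarrow> 'v) \<Rightarrow> ('e \<Rightarrow> 'e) \<Rightarrow> ('e \<Rightarrow> real) \<Rightarrow> bool" where
  "isoradial E rv org R \<theta> \<longleftrightarrow>
     (\<forall>e\<in>E. 0 < \<theta> e \<and> \<theta> e < pi / 2) \<and>
     (\<forall>e\<in>E. \<exists>m::int. (\<Sum>e'\<in>Ev E org (org e). 2 * \<theta> e') = 2 * pi * of_int (2 * m + 1)) \<and>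
     (\<forall>e\<in>E. \<exists>m::int. (\<Sum>e'\<in>orbit (rv \<circ> R) e. pi - 2 * \<theta> e') = 2 * pi * of_int (2 * m + 1))"

definition dbar :: "('e \<Rightarrow> 'e) \<Rightarrow> ('e \<Rightarrow> 'e) \<Rightarrow> ('e \<Rightarrow> real) \<Rightarrow> ('e \<Rightarrow> real) \<Rightarrow> ('e \<Rightarrow> real)
    \<Rightarrow> ('e \<Rightarrow> real) \<Rightarrow> ('e \<Rightarrow> complex) \<Rightarrow> 'e \<Rightarrow> complex" where
  "dbar rv R \<theta> wc ws wr g e =
     (let phi1 = of_real (wc e);
          phi2 = - \<i> * of_real (ws e);
          phi3 = - exp (- (\<i> * of_real ((\<theta> e + \<theta> (R e)) / 2))) * of_real (wr e)
      in inverse (of_real (sin (2 * \<theta> e))) *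
         (phi1 * of_real (cos (\<theta> e)) * g e + \<i> * phi2 * of_real (sin (\<theta> e)) * g (rv e)
          - exp (\<i> * of_real (\<theta> e)) * phi3 * g (R e)))"

end

theory Submission
  imports Defs
begin


lemma cong_cis: "cong2pi x y \<Longrightarrow> cis x = cis y"
proof -
  assume "cong2pi x y"
  then obtain n :: int where n: "x - y = 2 * pi * of_int n" unfolding cong2pi_def by blast
  hence "x = y + 2 * pi * of_int n" by simp
  hence "cis x = cis y * cis (2 * pi * of_int n)" by (simp only: cis_mult)
  also have "cis (2 * pi * of_int n) = 1" by (rule cis_multiple_2pi) simp
  finally show ?thesis by simp
qed

lemma exp_cis: "exp (\<i> * complex_of_real x) = cis x" by (simp add: cis_conv_exp)
lemma exp_mcis: "exp (- (\<i> * complex_of_real x)) = cis (- x)" by (simp add: cis_conv_exp)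

lemma sq_one: "(z::complex)^2 = 1 \<Longrightarrow> z = 1 \<or> z = -1" using power2_eq_1_iff by blast

locale ctx =
  fixes E :: "'e set" and rv R :: "'e \<Rightarrow> 'e" and org :: "'e \<Rightarrow> 'v"
    and \<theta> a rho c :: "'e \<Rightarrow> real" and Dh :: "'e \<Rightarrow> complex"
  assumes graph: "rotation_system E rv org R"
    and weights: "weights_ok E rv \<theta>"
    and angles: "angle_data E rv org R c rho a"
    and sqrtD: "\<forall>e\<in>E. Dh e ^ 2 = exp (\<i> * of_real (a e))"
begin

lemma finE: "finite E" using graph unfolding rotation_system_def by blast
lemma rv_in: "e \<in> E \<Longrightarrow> rv e \<in> E" using graph unfolding rotation_system_def by blast
lemma rv_rv[simp]: "e \<in> E \<Longrightarrow> rv (rv e) = e" using graph unfolding rotation_system_def by blast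
lemma rv_ne: "e \<in> E \<Longrightarrow> rv e \<noteq> e" using graph unfolding rotation_system_def by blast
lemma R_in: "e \<in> E \<Longrightarrow> R e \<in> E" using graph unfolding rotation_system_def by blast
lemma org_R[simp]: "e \<in> E \<Longrightarrow> org (R e) = org e" using graph unfolding rotation_system_def by blast
lemma orbit_eq: "e \<in> E \<Longrightarrow> orbit R e = Ev E org (org e)" using graph unfolding rotation_system_def by blast

lemma Rk_in: "e \<in> E \<Longrightarrow> (R ^^ k) e \<in> E"
  by (induction k) (auto intro: R_in)
lemma org_Rk[simp]: "e \<in> E \<Longrightarrow> org ((R ^^ k) e) = org e"
  by (induction k) (auto simp: Rk_in)

abbreviation d where "d e \<equiv> deg E org (org e)"

lemma Rk_period: "e \<in> E \<Longrightarrow> (R ^^ m) e = e \<Longrightarrow> (R ^^ (m * q + r)) e = (R ^^ r) e"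
proof (induction q)
  case 0 then show ?case by simp
next
  case (Suc q)
  have "m * Suc q + r = (m * q + r) + m" by simp
  hence "(R ^^ (m * Suc q + r)) e = (R ^^ (m * q + r)) ((R ^^ m) e)"
    by (simp only: funpow_add o_apply)
  then show ?case using Suc by simp
qed

lemma cyc:
  assumes w: "w \<in> E"
  shows "(R ^^ d w) w = w \<and> inj_on (\<lambda>k. (R ^^ k) w) {..<d w}
    \<and> (\<lambda>k. (R ^^ k) w) ` {..<d w} = Ev E org (org w) \<and> 0 < d w"
proof -
  have "w \<in> Ev E org (org (R w))" using w by (simp add: Ev_def R_in)
  hence "w \<in> orbit R (R w)" using orbit_eq[OF R_in[OF w]] by simp
  then obtain k where "w = (R ^^ k) (R w)" by (auto simp: orbit_def)
  hence ex: "(R ^^ Suc k) w = w" by (simp add: funpow_Suc_right del: funpow.simps)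
  define P where "P m \<longleftrightarrow> 0 < m \<and> (R ^^ m) w = w" for m
  have Pk: "P (Suc k)" using ex by (simp add: P_def)
  define m where "m = (LEAST m. P m)"
  have Pm: "P m" unfolding m_def by (rule LeastI[of P, OF Pk])
  have mmin: "\<And>j. P j \<Longrightarrow> m \<le> j" unfolding m_def by (rule Least_le[of P])
  have m0: "0 < m" and mw: "(R ^^ m) w = w" using Pm by (auto simp: P_def)
  have img: "(\<lambda>k. (R ^^ k) w) ` {..<m} = Ev E org (org w)"
  proof
    show "(\<lambda>k. (R ^^ k) w) ` {..<m} \<subseteq> Ev E org (org w)"
      using w by (auto simp: Ev_def Rk_in)
    show "Ev E org (org w) \<subseteq> (\<lambda>k. (R ^^ k) w) ` {..<m}"
    proof
      fix x assume "x \<in> Ev E org (org w)"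
      hence "x \<in> orbit R w" using orbit_eq[OF w] by simp
      then obtain n where x: "x = (R ^^ n) w" by (auto simp: orbit_def)
      have "n = m * (n div m) + n mod m" by simp
      hence "x = (R ^^ (n mod m)) w" using Rk_period[OF w mw, of "n div m" "n mod m"] x by metis
      moreover have "n mod m < m" using m0 by simp
      ultimately show "x \<in> (\<lambda>k. (R ^^ k) w) ` {..<m}" by blast
    qed
  qed
  have inj: "inj_on (\<lambda>k. (R ^^ k) w) {..<m}"
  proof (rule inj_onI, rule ccontr)
    fix i j assume i: "i \<in> {..<m}" and j: "j \<in> {..<m}" and eq: "(R ^^ i) w = (R ^^ j) w" and ne: "i \<noteq> j"
    { fix i j assume i: "i < m" and j: "j < m" and eq: "(R ^^ i) w = (R ^^ j) w" and lt: "i < j"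
      have "(R ^^ (m - j + i)) w = (R ^^ (m - j)) ((R ^^ i) w)" by (simp add: funpow_add)
      also have "\<dots> = (R ^^ (m - j)) ((R ^^ j) w)" using eq by simp
      also have "\<dots> = (R ^^ (m - j + j)) w" by (simp only: funpow_add o_apply)
      also have "\<dots> = (R ^^ m) w" using j by simp
      finally have "P (m - j + i)" using mw lt j by (simp add: P_def)
      hence "m \<le> m - j + i" by (rule mmin)
      hence False using lt j by simp }
    then show False using i j eq ne by (metis lessThan_iff linorder_neqE_nat)
  qed
  have "d w = m" unfolding deg_def using card_image[OF inj] img by simp
  then show ?thesis using mw inj img m0 by simp
qed

end



context ctx begin

lemma c_pos: "e \<in> E \<Longrightarrow> 0 < c e" using angles unfolding angle_data_def by blast
lemma c_sum: "e \<in> E \<Longrightarrow> (\<Sum>e'\<in>Ev E org (org e). c e') = 2 * pi" using angles unfolding angle_data_def by blast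
lemma a_rv: "e \<in> E \<Longrightarrow> cong2pi (a (rv e)) (a e + pi)" using angles unfolding angle_data_def by blast
lemma a_R: "e \<in> E \<Longrightarrow> cong2pi (a (R e) + rho (rv (R e))) (a e + rho (rv e) + c e)" using angles unfolding angle_data_def by blast
lemma th_pos: "e \<in> E \<Longrightarrow> 0 < \<theta> e" using weights unfolding weights_ok_def by blast
lemma th_le: "e \<in> E \<Longrightarrow> \<theta> e \<le> pi / 2" using weights unfolding weights_ok_def by blast
lemma th_rv: "e \<in> E \<Longrightarrow> \<theta> (rv e) = \<theta> e" using weights unfolding weights_ok_def by blast

lemma Dh_sq: "e \<in> E \<Longrightarrow> Dh e ^ 2 = cis (a e)" using sqrtD by (simp add: exp_cis)
lemma Dh_nz: "e \<in> E \<Longrightarrow> Dh e \<noteq> 0" using Dh_sq by fastforce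
lemma Dh_norm: "e \<in> E \<Longrightarrow> cmod (Dh e) = 1"
proof -
  assume e: "e \<in> E"
  have "cmod (Dh e) ^ 2 = 1" using Dh_sq[OF e] by (metis norm_cis norm_power)
  thus ?thesis by (simp add: power2_eq_1_iff) (smt (verit) norm_ge_zero)
qed
lemma Dh_cnj: "e \<in> E \<Longrightarrow> Dh e * cnj (Dh e) = 1"
  using Dh_norm by (metis complex_norm_square mult.commute of_real_1 power_one)
lemma Dh_inv: "e \<in> E \<Longrightarrow> inverse (Dh e) = cnj (Dh e)"
  using Dh_cnj by (metis inverse_unique)

lemma corner1: "corner_idx R w (R w) = 1"
  unfolding corner_idx_def by (rule Least_equality) auto

lemma cornerk: assumes w: "w \<in> E" and k: "0 < k" "k < d w"
  shows "corner_idx R w ((R ^^ k) w) = k"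
  unfolding corner_idx_def
proof (rule Least_equality)
  show "0 < k \<and> (R ^^ k) w = (R ^^ k) w" using k by simp
  fix y assume y: "0 < y \<and> (R ^^ y) w = (R ^^ k) w"
  show "k \<le> y"
  proof (rule ccontr)
    assume "\<not> k \<le> y"
    hence "y < d w" using k by simp
    hence "y = k" using y k cyc[OF w] unfolding inj_on_def by blast
    thus False using \<open>\<not> k \<le> y\<close> by simp
  qed
qed

abbreviation q where "q \<equiv> qf rv R c rho"
abbreviation epsl where "epsl \<equiv> eps rv R c rho Dh"

lemma beta_eq: "w \<in> E \<Longrightarrow> beta rv R c rho w = rho (rv w) - rho (rv (R w)) + c w"
  unfolding beta_def alpha_def using corner1[of w] by simp

lemma q_cis: "q w = cis (beta rv R c rho w / 2)" by (simp only: qf_def cis_conv_exp)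

definition Q where "Q w k = (\<Prod>j<k. q ((R ^^ j) w))"

lemma Q_eq: "w \<in> E \<Longrightarrow> Q w k = cis ((rho (rv w) - rho (rv ((R ^^ k) w)) + (\<Sum>j<k. c ((R ^^ j) w))) / 2)"
proof (induction k)
  case 0 then show ?case by (simp add: Q_def)
next
  case (Suc k)
  have "Q w (Suc k) = Q w k * q ((R ^^ k) w)" by (simp add: Q_def)
  also have "\<dots> = cis ((rho (rv w) - rho (rv ((R ^^ k) w)) + (\<Sum>j<k. c ((R ^^ j) w))) / 2)
      * cis ((rho (rv ((R ^^ k) w)) - rho (rv (R ((R ^^ k) w))) + c ((R ^^ k) w)) / 2)"
    using Suc by (simp add: q_cis beta_eq Rk_in)
  also have "\<dots> = cis ((rho (rv w) - rho (rv ((R ^^ k) w)) + (\<Sum>j<k. c ((R ^^ j) w))) / 2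
      + (rho (rv ((R ^^ k) w)) - rho (rv (R ((R ^^ k) w))) + c ((R ^^ k) w)) / 2)"
    by (simp only: cis_mult)
  also have "\<dots> = cis ((rho (rv w) - rho (rv ((R ^^ Suc k) w)) + (\<Sum>j<Suc k. c ((R ^^ j) w))) / 2)"
    by (rule arg_cong[where f=cis]) (simp add: field_simps)
  finally show ?case .
qed

lemma Q_nz: "Q w k \<noteq> 0" unfolding Q_def q_cis by (simp add: cis_neq_zero)

lemma eps_pm: assumes w: "w \<in> E" shows "epsl w = 1 \<or> epsl w = -1"
proof -
  have "epsl w ^ 2 = Dh (R w) ^ 2 / (q w ^ 2 * Dh w ^ 2)"
    unfolding eps_def by (simp add: power_divide power_mult_distrib)
  also have "\<dots> = cis (a (R w)) / (cis (beta rv R c rho w) * cis (a w))"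
    using w by (simp add: Dh_sq R_in q_cis DeMoivre)
  also have "\<dots> = cis (a (R w) + rho (rv (R w)) - (a w + rho (rv w) + c w))"
    using w by (simp add: beta_eq cis_mult cis_divide algebra_simps)
  also have "\<dots> = 1"
    using cong_cis[OF a_R[OF w]] by (simp add: cis_divide[symmetric] cis_neq_zero)
  finally show ?thesis by (rule sq_one)
qed

lemma Dh_R: "w \<in> E \<Longrightarrow> Dh (R w) = epsl w * q w * Dh w"
  unfolding eps_def using Dh_nz[of w] by (simp add: q_cis cis_neq_zero)

lemma Dh_Rk: "w \<in> E \<Longrightarrow> Dh ((R ^^ k) w) = epsb rv R c rho Dh w k * Q w k * Dh w"
proof (induction k)
  case 0 then show ?case by (simp add: epsb_def Q_def)
next
  case (Suc k)
  have "Dh ((R ^^ Suc k) w) = epsl ((R ^^ k) w) * q ((R ^^ k) w) * Dh ((R ^^ k) w)"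
    using Dh_R[OF Rk_in[OF Suc.prems]] by simp
  also have "\<dots> = epsb rv R c rho Dh w (Suc k) * Q w (Suc k) * Dh w"
    using Suc by (simp add: epsb_def Q_def)
  finally show ?case .
qed

definition ep where "ep w = Re (epsl w)"
lemma eps_real: assumes "w \<in> E" shows "epsl w = of_real (ep w)"
  using eps_pm[OF assms] unfolding ep_def by auto
lemma ep_pm: assumes "w \<in> E" shows "ep w = 1 \<or> ep w = -1"
  using eps_pm[OF assms] unfolding ep_def by auto
lemma ep_sq: assumes "w \<in> E" shows "ep w * ep w = 1"
  using ep_pm[OF assms] by fastforce

definition eb where "eb w k = (\<Prod>j<k. ep ((R ^^ j) w))"
lemma epsb_eb: "w \<in> E \<Longrightarrow> epsb rv R c rho Dh w k = of_real (eb w k)"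
  unfolding epsb_def eb_def using eps_real Rk_in by simp
lemma eb_pm: "w \<in> E \<Longrightarrow> eb w k = 1 \<or> eb w k = -1"
proof (induction k)
  case 0 then show ?case by (simp add: eb_def)
next
  case (Suc k) then show ?case using ep_pm[OF Rk_in[OF Suc.prems, of k]] by (auto simp: eb_def)
qed
lemma eb_sq: assumes "w \<in> E" shows "eb w k * eb w k = 1"
  using eb_pm[OF assms, of k] by fastforce

lemma sumc: assumes w: "w \<in> E" shows "(\<Sum>j<d w. c ((R ^^ j) w)) = 2 * pi"
proof -
  have inj: "inj_on (\<lambda>k. (R ^^ k) w) {..<d w}" using cyc[OF w] by blast
  have "(\<Sum>j<d w. c ((R ^^ j) w)) = (\<Sum>e'\<in>(\<lambda>k. (R ^^ k) w) ` {..<d w}. c e')"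
    using sum.reindex[OF inj, of c] by simp
  also have "\<dots> = 2 * pi" using cyc[OF w] c_sum[OF w] by simp
  finally show ?thesis .
qed

lemma eb_d: assumes w: "w \<in> E" shows "eb w (d w) = -1"
proof -
  have "Dh w = of_real (eb w (d w)) * Q w (d w) * Dh w"
    using Dh_Rk[OF w, of "d w"] cyc[OF w] epsb_eb[OF w] by simp
  moreover have "Q w (d w) = -1" using Q_eq[OF w, of "d w"] cyc[OF w] sumc[OF w] by simp
  ultimately have h: "Dh w = of_real (eb w (d w)) * (-1) * Dh w" by simp
  have "Dh w * (1 + of_real (eb w (d w))) = Dh w - of_real (eb w (d w)) * (-1) * Dh w"
    by (simp add: algebra_simps)
  hence "Dh w * (1 + of_real (eb w (d w))) = 0" using h by (metis diff_self)
  hence "1 + complex_of_real (eb w (d w)) = 0" using Dh_nz[OF w] by simp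
  hence "complex_of_real (eb w (d w) + 1) = 0" by (simp add: add.commute)
  thus ?thesis by (simp only: of_real_eq_0_iff)
qed

end



lemma Pr_unit: "cmod u = 1 \<Longrightarrow> Pr z u = of_real (Re (z * cnj u)) * u"
  unfolding Pr_def by simp

context ctx begin

lemma zmid_rv: "e \<in> E \<Longrightarrow> zmid rv (rv e) = zmid rv e"
  unfolding zmid_def by auto

lemma cnj_Dh_sq: "e \<in> E \<Longrightarrow> cnj (Dh e) ^ 2 = cis (- a e)"
  by (metis Dh_sq cis_cnj complex_cnj_power)

definition sg where "sg e = Re (- \<i> * Dh (rv e) * cnj (Dh e))"

lemma sg_prop: assumes e: "e \<in> E"
  shows "Dh (rv e) = \<i> * of_real (sg e) * Dh e \<and> (sg e = 1 \<or> sg e = -1)"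
proof -
  define z where "z = - \<i> * Dh (rv e) * cnj (Dh e)"
  have "z ^ 2 = - (Dh (rv e) ^ 2 * cnj (Dh e) ^ 2)"
    unfolding z_def by (simp add: power_mult_distrib)
  also have "\<dots> = - (cis (a (rv e)) * cis (- a e))"
    using e by (simp add: Dh_sq rv_in cnj_Dh_sq)
  also have "cis (a (rv e)) = cis (a e + pi)" using cong_cis[OF a_rv[OF e]] .
  also have "- (cis (a e + pi) * cis (- a e)) = 1" by (simp add: cis_mult)
  finally have "z = 1 \<or> z = -1" by (rule sq_one)
  moreover have "\<i> * z * Dh e = Dh (rv e)"
    unfolding z_def using Dh_cnj[OF e] by (simp add: algebra_simps)
  ultimately show ?thesis unfolding sg_def z_def[symmetric] by auto
qed

lemma Dh_rv: "e \<in> E \<Longrightarrow> Dh (rv e) = \<i> * of_real (sg e) * Dh e" using sg_prop by blast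
lemma sg_pm: "e \<in> E \<Longrightarrow> sg e = 1 \<or> sg e = -1" using sg_prop by blast
lemma sg_sq: assumes "e \<in> E" shows "sg e * sg e = 1" using sg_pm[OF assms] by auto

lemma sg_rv: assumes e: "e \<in> E" shows "sg (rv e) = - sg e"
proof -
  have "Dh e = \<i> * of_real (sg (rv e)) * (\<i> * of_real (sg e) * Dh e)"
    using Dh_rv[OF rv_in[OF e]] Dh_rv[OF e] e by simp
  hence "Dh e * (1 + of_real (sg (rv e) * sg e)) = 0" by (simp add: algebra_simps) (metis add.left_inverse)
  hence "complex_of_real (sg (rv e) * sg e + 1) = 0" using Dh_nz[OF e] by (simp add: add.commute)
  hence "sg (rv e) * sg e = -1" by (simp only: of_real_eq_0_iff)
  thus ?thesis using sg_pm[OF e] sg_pm[OF rv_in[OF e]] by auto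
qed

definition tau where "tau e = Re (cis (a e / 2) * cnj (Dh e))"

lemma tau_prop: assumes e: "e \<in> E"
  shows "cis (a e / 2) = of_real (tau e) * Dh e \<and> (tau e = 1 \<or> tau e = -1)"
proof -
  define z where "z = cis (a e / 2) * cnj (Dh e)"
  have "z ^ 2 = cis (a e / 2) ^ 2 * cnj (Dh e) ^ 2" unfolding z_def by (simp add: power_mult_distrib)
  also have "\<dots> = 1" using e by (simp add: cnj_Dh_sq DeMoivre cis_mult)
  finally have "z = 1 \<or> z = -1" by (rule sq_one)
  moreover have "z * Dh e = cis (a e / 2)"
    unfolding z_def using Dh_cnj[OF e] by (simp add: algebra_simps)
  ultimately show ?thesis unfolding tau_def z_def[symmetric] by auto
qed

definition r where "r F e = Re (Dh e * F (zmid rv e))"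
definition s where "s e = sin (\<theta> e / 2)"
definition co where "co e = cos (\<theta> e / 2)"

lemma Dh_F: assumes e: "e \<in> E"
  shows "Dh e * F (zmid rv e) = of_real (r F e) - \<i> * of_real (sg e * r F (rv e))"
proof -
  have "r F (rv e) = Re (\<i> * of_real (sg e) * (Dh e * F (zmid rv e)))"
    unfolding r_def using e by (simp add: zmid_rv Dh_rv mult.assoc)
  also have "\<dots> = - sg e * Im (Dh e * F (zmid rv e))" by simp
  finally have "sg e * r F (rv e) = - Im (Dh e * F (zmid rv e))"
    using sg_sq[OF e] by (simp add: mult.assoc[symmetric])
  thus ?thesis unfolding r_def by (simp add: complex_eq_iff)
qed

lemma Smap_eq: assumes e: "e \<in> E"
  shows "Smap E rv \<theta> a F e = of_real (s e * r F e) * cnj (Dh e)"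
proof -
  have u: "exp (- (\<i> * complex_of_real (a e / 2))) = of_real (tau e) * cnj (Dh e)"
    using tau_prop[OF e] by (metis cis_cnj complex_cnj_complex_of_real complex_cnj_mult exp_mcis)
  have n: "cmod (of_real (tau e) * cnj (Dh e)) = 1"
    using tau_prop[OF e] Dh_norm[OF e] by (auto simp: norm_mult)
  have "Pr (F (zmid rv e)) (exp (- (\<i> * complex_of_real (a e / 2))))
      = of_real (Re (F (zmid rv e) * (of_real (tau e) * Dh e))) * (of_real (tau e) * cnj (Dh e))"
    unfolding u by (simp add: Pr_unit[OF n])
  also have "Re (F (zmid rv e) * (of_real (tau e) * Dh e)) = tau e * r F e"
    unfolding r_def by (simp add: algebra_simps)
  also have "of_real (tau e * r F e) * (of_real (tau e) * cnj (Dh e)) = of_real (tau e * tau e * r F e) * cnj (Dh e)"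
    by (simp add: algebra_simps)
  also have "tau e * tau e = 1" using tau_prop[OF e] by auto
  finally show ?thesis unfolding Smap_def s_def using e by simp
qed

abbreviation T where "T F \<equiv> Tmap E rv org R c rho \<theta> Dh F"

definition gg where "gg F x = s x * r F x"

lemma Tmap_eq: assumes w: "w \<in> E"
  shows "T F w = (\<Sum>k<d w. eb w k * gg F ((R ^^ k) w))"
  unfolding Tmap_def gg_def using w
  by (auto simp: epsb_eb r_def s_def algebra_simps intro!: sum.cong)

lemma eb_Suc: assumes w: "w \<in> E" shows "eb w (Suc k) = ep w * eb (R w) k"
  unfolding eb_def by (simp only: prod.lessThan_Suc_shift) (simp add: funpow_Suc_right del: funpow.simps)

lemma Trec: assumes w: "w \<in> E"
  shows "T F w - ep w * T F (R w) = 2 * gg F w"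
proof -
  have dR: "d (R w) = d w" using w by simp
  have "ep w * T F (R w) = (\<Sum>k<d w. ep w * eb (R w) k * gg F ((R ^^ k) (R w)))"
    using Tmap_eq[OF R_in[OF w]] dR by (simp add: sum_distrib_left mult.assoc)
  also have "\<dots> = (\<Sum>k<d w. eb w (Suc k) * gg F ((R ^^ Suc k) w))"
    using w by (simp add: eb_Suc funpow_Suc_right del: funpow.simps)
  also have "\<dots> = (\<Sum>k<Suc (d w). eb w k * gg F ((R ^^ k) w)) - eb w 0 * gg F w"
    by (simp only: sum.lessThan_Suc_shift) simp
  also have "\<dots> = T F w + eb w (d w) * gg F ((R ^^ d w) w) - gg F w"
    using Tmap_eq[OF w] by (simp add: eb_def)
  also have "\<dots> = T F w - 2 * gg F w" using eb_d[OF w] cyc[OF w] by simp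
  finally show ?thesis by simp
qed

end



lemma Re_aux1: "Re (\<i> * (of_real r - \<i> * of_real p) * (of_real cc + \<i> * of_real sn)) = p * cc - r * sn"
  by (simp add: algebra_simps)
lemma Re_aux2: "Re (\<i> * (of_real r - \<i> * of_real p) * (of_real cc - \<i> * of_real sn)) = p * cc + r * sn"
  by (simp add: algebra_simps)
lemma cis_split: "cis x = of_real (cos x) + \<i> * of_real (sin x)"
  by (simp add: complex_eq_iff)

context ctx begin

lemma s_pos: "e \<in> E \<Longrightarrow> 0 < s e"
  unfolding s_def using th_pos[of e] th_le[of e] by (intro sin_gt_zero) auto
lemma co_pos: "e \<in> E \<Longrightarrow> 0 < co e"
  unfolding co_def using th_pos[of e] th_le[of e] by (intro cos_gt_zero_pi) auto
lemma xw_eq: "xw \<theta> e = s e / co e"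
  unfolding xw_def s_def co_def by (simp add: tan_def)

lemma QQ: "u \<in> E \<Longrightarrow> Q u k * cnj (Q u k) = 1"
  by (simp add: Q_eq cis_cnj cis_mult)

lemma nbr_set: assumes e: "e \<in> E"
  shows "{e' \<in> E. org e' = tgt rv org e \<and> e' \<noteq> rv e} = (\<lambda>k. (R ^^ k) (rv e)) ` {1..<d (rv e)}"
proof -
  define u where "u = rv e"
  have u: "u \<in> E" using rv_in[OF e] u_def by simp
  have cy: "(\<lambda>k. (R ^^ k) u) ` {..<d u} = Ev E org (org u)" "inj_on (\<lambda>k. (R ^^ k) u) {..<d u}"
    using cyc[OF u] by auto
  have "{e' \<in> E. org e' = tgt rv org e \<and> e' \<noteq> rv e} = Ev E org (org u) - {u}"
    unfolding Ev_def tgt_def u_def by auto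
  also have "\<dots> = (\<lambda>k. (R ^^ k) u) ` {..<d u} - (\<lambda>k. (R ^^ k) u) ` {0}" using cy by simp
  also have "\<dots> = (\<lambda>k. (R ^^ k) u) ` ({..<d u} - {0})"
    using cy(2) cyc[OF u] by (intro inj_on_image_set_diff[symmetric]) auto
  also have "{..<d u} - {0} = {1..<d u}" by auto
  finally show ?thesis unfolding u_def .
qed

lemma T_split: assumes u: "u \<in> E"
  shows "(\<Sum>k\<in>{1..<d u}. eb u k * gg F ((R ^^ k) u)) = T F u - gg F u"
proof -
  have "{..<d u} = insert 0 {1..<d u}" using cyc[OF u] by auto
  hence "T F u = eb u 0 * gg F u + (\<Sum>k\<in>{1..<d u}. eb u k * gg F ((R ^^ k) u))"
    using Tmap_eq[OF u] by simp
  thus ?thesis by (simp add: eb_def)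
qed

lemma KW_S: assumes e: "e \<in> E"
  shows "KW E rv org R c rho \<theta> (Smap E rv \<theta> a F) e
    = cnj (Dh e) * of_real (gg F e + xw \<theta> e * sg e * (T F (rv e) - gg F (rv e)))"
proof -
  define u where "u = rv e"
  have u: "u \<in> E" and ru: "rv u = e" using rv_in[OF e] e u_def by auto
  define f where "f k = (R ^^ k) u" for k
  have inj: "inj_on f {1..<d u}"
    using cyc[OF u] unfolding f_def by (auto intro: inj_on_subset)
  have trm: "exp (\<i> * of_real (alpha rv R c rho e (f k) / 2)) * Smap E rv \<theta> a F (f k)
      = - (cnj (Dh e) * of_real (sg e * (eb u k * gg F (f k))))" if k: "k \<in> {1..<d u}" for k
  proof -
    have ck: "corner_idx R (rv e) (f k) = k" using cornerk[OF u, of k] k unfolding f_def u_def by simp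
    have "alpha rv R c rho e (f k) / 2 = (rho (rv u) - rho (rv (f k)) + (\<Sum>j<k. c ((R ^^ j) u))) / 2 + (- (pi / 2))"
      unfolding alpha_def ck using ru by (simp add: f_def u_def field_simps)
    hence "cis (alpha rv R c rho e (f k) / 2) = cis ((rho (rv u) - rho (rv (f k)) + (\<Sum>j<k. c ((R ^^ j) u))) / 2) * cis (- (pi / 2))"
      by (simp only: cis_mult)
    hence ex: "exp (\<i> * of_real (alpha rv R c rho e (f k) / 2)) = Q u k * (- \<i>)"
      by (simp only: exp_cis Q_eq[OF u] f_def cis_minus_pi_half)
    have fk: "f k \<in> E" unfolding f_def by (rule Rk_in[OF u])
    have sm: "Smap E rv \<theta> a F (f k) = of_real (gg F (f k)) * (of_real (eb u k) * cnj (Q u k) * (- \<i> * of_real (sg e) * cnj (Dh e)))"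
      using Smap_eq[OF fk] Dh_Rk[OF u, of k] epsb_eb[OF u] Dh_rv[OF e]
      by (simp add: gg_def f_def u_def)
    have "exp (\<i> * of_real (alpha rv R c rho e (f k) / 2)) * Smap E rv \<theta> a F (f k)
        = (\<i> * \<i>) * (Q u k * cnj (Q u k)) * (cnj (Dh e) * of_real (sg e * (eb u k * gg F (f k))))"
      unfolding ex sm by (simp only: of_real_mult mult.assoc mult.commute mult.left_commute mult_minus_left mult_minus_right minus_minus)
    also have "\<dots> = - (cnj (Dh e) * of_real (sg e * (eb u k * gg F (f k))))" by (simp add: QQ[OF u])
    finally show ?thesis .
  qed
  have "KW E rv org R c rho \<theta> (Smap E rv \<theta> a F) e
      = Smap E rv \<theta> a F e - of_real (xw \<theta> e) * (\<Sum>k\<in>{1..<d u}. exp (\<i> * of_real (alpha rv R c rho e (f k) / 2)) * Smap E rv \<theta> a F (f k))"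
  proof -
    have nb: "{e' \<in> E. org e' = tgt rv org e \<and> e' \<noteq> rv e} = f ` {1..<d u}"
      using nbr_set[OF e] by (simp add: f_def u_def)
    have "(\<Sum>e'\<in>f ` {1..<d u}. exp (\<i> * of_real (alpha rv R c rho e e' / 2)) * Smap E rv \<theta> a F e')
       = (\<Sum>k\<in>{1..<d u}. exp (\<i> * of_real (alpha rv R c rho e (f k) / 2)) * Smap E rv \<theta> a F (f k))"
      by (rule sum.reindex_cong[OF inj refl refl])
    thus ?thesis unfolding KW_def nb by simp
  qed
  also have "(\<Sum>k\<in>{1..<d u}. exp (\<i> * of_real (alpha rv R c rho e (f k) / 2)) * Smap E rv \<theta> a F (f k))
      = - (cnj (Dh e) * of_real (sg e * (\<Sum>k\<in>{1..<d u}. eb u k * gg F (f k))))"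
    using trm by (simp add: sum_negf sum_distrib_left)
  also have "(\<Sum>k\<in>{1..<d u}. eb u k * gg F (f k)) = T F u - gg F u" using T_split[OF u] by (simp add: f_def)
  finally show ?thesis using Smap_eq[OF e] by (simp add: gg_def u_def algebra_simps)
qed

end



lemma aux_lin: fixes s c r T g sg :: real
  assumes "s \<noteq> 0" "c \<noteq> 0" "sg = 1 \<or> sg = -1"
  shows "(s*r - s/c*sg*(T - g) = 0) \<longleftrightarrow> T = g + sg*c*r"
proof -
  have sq: "sg * sg = 1" using assms(3) by auto
  have "s*r - s/c*sg*(T - g) = (s/c)*sg*(sg*c*r - (T-g))"
    using assms(2) sq by (simp add: field_simps)
  moreover have "(s/c)*sg \<noteq> 0" using assms by auto
  ultimately show ?thesis by auto
qed

context ctx begin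

definition U where "U F e = gg F e + sg e * co e * r F (rv e)"

lemma W_rv: assumes e: "e \<in> E"
  shows "(gg F (rv e) + xw \<theta> (rv e) * sg (rv e) * (T F (rv (rv e)) - gg F (rv (rv e))) = 0) \<longleftrightarrow> T F e = U F e"
proof -
  have g: "gg F (rv e) = s e * r F (rv e)" unfolding gg_def s_def using th_rv[OF e] by simp
  have x: "xw \<theta> (rv e) = s e / co e" unfolding xw_eq s_def co_def using th_rv[OF e] by simp
  have sp: "s e \<noteq> 0" "co e \<noteq> 0" using s_pos[OF e] co_pos[OF e] by auto
  have eq: "(gg F (rv e) + xw \<theta> (rv e) * sg (rv e) * (T F (rv (rv e)) - gg F (rv (rv e))) = 0) \<longleftrightarrow>
      (s e * r F (rv e) - s e / co e * sg e * (T F e - gg F e) = 0)"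
    using e by (simp add: g x sg_rv)
  have fin: "(s e * r F (rv e) - s e / co e * sg e * (T F e - gg F e) = 0) \<longleftrightarrow> T F e = gg F e + sg e * co e * r F (rv e)"
    using aux_lin[OF sp sg_pm[OF e]] .
  show ?thesis using eq fin unfolding U_def by simp
qed

lemma KW_iff: "(\<forall>e\<in>E. KW E rv org R c rho \<theta> (Smap E rv \<theta> a F) e = 0) \<longleftrightarrow> (\<forall>e\<in>E. T F e = U F e)"
proof -
  have z: "KW E rv org R c rho \<theta> (Smap E rv \<theta> a F) e = 0 \<longleftrightarrow>
     gg F e + xw \<theta> e * sg e * (T F (rv e) - gg F (rv e)) = 0" if e: "e \<in> E" for e
  proof -
    have cnz: "cnj (Dh e) \<noteq> 0" using Dh_nz[OF e] by simp
    show ?thesis using cnz by (simp only: KW_S[OF e] mult_eq_0_iff of_real_eq_0_iff simp_thms)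
  qed
  show ?thesis
  proof
    assume h: "\<forall>e\<in>E. KW E rv org R c rho \<theta> (Smap E rv \<theta> a F) e = 0"
    show "\<forall>e\<in>E. T F e = U F e"
    proof
      fix e assume e: "e \<in> E"
      have "KW E rv org R c rho \<theta> (Smap E rv \<theta> a F) (rv e) = 0" using h rv_in[OF e] by blast
      thus "T F e = U F e" using z[OF rv_in[OF e]] W_rv[OF e] by simp
    qed
  next
    assume h: "\<forall>e\<in>E. T F e = U F e"
    show "\<forall>e\<in>E. KW E rv org R c rho \<theta> (Smap E rv \<theta> a F) e = 0"
    proof
      fix e assume e: "e \<in> E"
      have "T F (rv e) = U F (rv e)" using h rv_in[OF e] by blast
      moreover note W_rv[OF rv_in[OF e], unfolded rv_rv[OF e]]
      ultimately have "gg F e + xw \<theta> e * sg e * (T F (rv e) - gg F (rv e)) = 0"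
        by blast
      thus "KW E rv org R c rho \<theta> (Smap E rv \<theta> a F) e = 0" using z[OF e] by simp
    qed
  qed
qed

end



lemma aux_sign: fixes t t' X Y ep :: real
  assumes "t = 1 \<or> t = -1" "t' = 1 \<or> t' = -1"
  shows "(t * X = t' * Y * (t * t' * ep)) \<longleftrightarrow> X = ep * Y"
  using assms by (auto simp: algebra_simps)

lemma Re_ofr: "Re (complex_of_real t * z) = t * Re z" by simp

context ctx begin

lemma tau_e: "e \<in> E \<Longrightarrow> cis (a e / 2) = of_real (tau e) * Dh e" using tau_prop by blast
lemma tau_pm: "e \<in> E \<Longrightarrow> tau e = 1 \<or> tau e = -1" using tau_prop by blast

lemma hol: assumes e: "e \<in> E"
  shows "(Pr (exp (\<i> * of_real (pi / 4)) * F (zmid rv e)) (exp (- (\<i> * of_real ((pi / 2 + a e + \<theta> e) / 2))))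
        = Pr (exp (\<i> * of_real (pi / 4)) * F (zmid rv (R e))) (exp (- (\<i> * of_real ((pi / 2 + a (R e) - \<theta> (R e)) / 2))))
          * exp (\<i> * of_real ((beta rv R c rho e - \<theta> e - \<theta> (R e)) / 2)))
     \<longleftrightarrow> U F e - 2 * gg F e = ep e * U F (R e)"
proof -
  define e' where "e' = R e"
  have e': "e' \<in> E" using R_in[OF e] e'_def by simp
  define d1 where "d1 = cis (- ((pi / 2 + a e + \<theta> e) / 2))"
  define d2 where "d2 = cis (- ((pi / 2 + a e' - \<theta> e') / 2))"
  define lam where "lam = cis ((beta rv R c rho e - \<theta> e - \<theta> e') / 2)"
  define w where "w = cis (pi / 4)"
  have n1: "cmod d1 = 1" and n2: "cmod d2 = 1" unfolding d1_def d2_def by simp_all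
  have d1nz: "d1 \<noteq> 0" unfolding d1_def by (simp add: cis_neq_zero)
  have cd1: "w * cnj d1 = \<i> * of_real (tau e) * Dh e * cis (\<theta> e / 2)"
  proof -
    have "w * cnj d1 = cis (pi / 4 + (pi / 2 + a e + \<theta> e) / 2)"
      unfolding w_def d1_def by (simp only: cis_cnj cis_mult minus_minus)
    also have "\<dots> = cis (pi / 2 + a e / 2 + \<theta> e / 2)"
      by (rule arg_cong[where f=cis]) (simp add: field_simps)
    also have "\<dots> = cis (pi / 2) * cis (a e / 2) * cis (\<theta> e / 2)"
      by (simp only: cis_mult)
    finally have "w * cnj d1 = cis (pi / 2) * cis (a e / 2) * cis (\<theta> e / 2)" .
    thus ?thesis using tau_e[OF e] by simp
  qed
  have A: "Re (w * F (zmid rv e) * cnj d1) = tau e * (U F e - 2 * gg F e)"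
  proof -
    have "w * F (zmid rv e) * cnj d1 = of_real (tau e) * (\<i> * (Dh e * F (zmid rv e)) * cis (\<theta> e / 2))"
      using cd1 by (simp add: algebra_simps)
    also have "\<dots> = of_real (tau e) * (\<i> * (of_real (r F e) - \<i> * of_real (sg e * r F (rv e))) * (of_real (co e) + \<i> * of_real (s e)))"
      unfolding Dh_F[OF e] cis_split co_def s_def ..
    finally have "Re (w * F (zmid rv e) * cnj d1) = tau e * (sg e * r F (rv e) * co e - r F e * s e)"
      by (simp only: Re_aux1 Re_ofr)
    thus ?thesis unfolding U_def gg_def by (simp add: algebra_simps)
  qed
  have cd2: "w * cnj d2 = \<i> * of_real (tau e') * Dh e' * cis (- (\<theta> e' / 2))"
  proof -
    have "w * cnj d2 = cis (pi / 4 + (pi / 2 + a e' - \<theta> e') / 2)"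
      unfolding w_def d2_def by (simp only: cis_cnj cis_mult minus_minus)
    also have "\<dots> = cis (pi / 2 + a e' / 2 + - (\<theta> e' / 2))"
      by (rule arg_cong[where f=cis]) (simp add: field_simps)
    also have "\<dots> = cis (pi / 2) * cis (a e' / 2) * cis (- (\<theta> e' / 2))"
      by (simp only: cis_mult)
    finally have "w * cnj d2 = cis (pi / 2) * cis (a e' / 2) * cis (- (\<theta> e' / 2))" .
    thus ?thesis using tau_e[OF e'] by simp
  qed
  have B: "Re (w * F (zmid rv e') * cnj d2) = tau e' * U F e'"
  proof -
    have "w * F (zmid rv e') * cnj d2 = of_real (tau e') * (\<i> * (Dh e' * F (zmid rv e')) * cis (- (\<theta> e' / 2)))"
      using cd2 by (simp add: algebra_simps)
    also have "\<dots> = of_real (tau e') * (\<i> * (of_real (r F e') - \<i> * of_real (sg e' * r F (rv e'))) * (of_real (co e') - \<i> * of_real (s e')))"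
      unfolding Dh_F[OF e'] cis_split co_def s_def by simp
    finally have "Re (w * F (zmid rv e') * cnj d2) = tau e' * (sg e' * r F (rv e') * co e' + r F e' * s e')"
      by (simp only: Re_aux2 Re_ofr)
    thus ?thesis unfolding U_def gg_def by (simp add: algebra_simps)
  qed
  have mu: "d2 * lam = d1 * of_real (tau e * tau e' * ep e)"
  proof -
    have "d2 * lam = cis (- ((pi / 2 + a e' - \<theta> e') / 2) + (beta rv R c rho e - \<theta> e - \<theta> e') / 2)"
      unfolding d2_def lam_def by (simp only: cis_mult)
    also have "\<dots> = cis (- ((pi / 2 + a e + \<theta> e) / 2) + (a e / 2 + - (a e' / 2) + beta rv R c rho e / 2))"
      by (rule arg_cong[where f=cis]) (simp add: field_simps)
    also have "\<dots> = d1 * (cis (a e / 2) * cnj (cis (a e' / 2)) * q e)"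
      unfolding d1_def q_cis by (simp only: cis_mult cis_cnj)
    finally have "d2 * lam = d1 * (cis (a e / 2) * cnj (cis (a e' / 2)) * q e)" .
    also have "cis (a e / 2) * cnj (cis (a e' / 2)) * q e
        = of_real (tau e) * of_real (tau e') * (q e * Dh e) * cnj (Dh e')"
      using tau_e[OF e] tau_e[OF e'] by (simp add: algebra_simps)
    also have "q e * Dh e = of_real (ep e) * Dh e'"
    proof -
      have "Dh e' = of_real (ep e) * (q e * Dh e)"
        using Dh_R[OF e] eps_real[OF e] e'_def by (simp add: mult.assoc)
      hence "of_real (ep e) * Dh e' = of_real (ep e * ep e) * (q e * Dh e)" by (simp add: mult.assoc)
      thus ?thesis using ep_sq[OF e] by simp
    qed
    also have "of_real (tau e) * of_real (tau e') * (of_real (ep e) * Dh e') * cnj (Dh e')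
        = of_real (tau e * tau e' * ep e) * (Dh e' * cnj (Dh e'))" by (simp add: algebra_simps)
    also have "\<dots> = of_real (tau e * tau e' * ep e)" using Dh_cnj[OF e'] by simp
    finally show ?thesis .
  qed
  have "(Pr (exp (\<i> * of_real (pi / 4)) * F (zmid rv e)) (exp (- (\<i> * of_real ((pi / 2 + a e + \<theta> e) / 2))))
        = Pr (exp (\<i> * of_real (pi / 4)) * F (zmid rv (R e))) (exp (- (\<i> * of_real ((pi / 2 + a (R e) - \<theta> (R e)) / 2))))
          * exp (\<i> * of_real ((beta rv R c rho e - \<theta> e - \<theta> (R e)) / 2)))
     \<longleftrightarrow> Pr (w * F (zmid rv e)) d1 = Pr (w * F (zmid rv e')) d2 * lam"
    unfolding d1_def d2_def lam_def w_def e'_def by (simp only: exp_cis exp_mcis)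
  also have "\<dots> \<longleftrightarrow> of_real (Re (w * F (zmid rv e) * cnj d1)) * d1 = of_real (Re (w * F (zmid rv e') * cnj d2)) * d2 * lam"
    by (simp only: Pr_unit[OF n1] Pr_unit[OF n2])
  also have "\<dots> \<longleftrightarrow> of_real (tau e * (U F e - 2 * gg F e)) * d1 = of_real (tau e' * U F e') * (d2 * lam)"
    by (simp only: A B) (simp only: mult.assoc)
  also have "\<dots> \<longleftrightarrow> of_real (tau e * (U F e - 2 * gg F e)) * d1 = of_real (tau e' * U F e' * (tau e * tau e' * ep e)) * d1"
    unfolding mu by (simp add: algebra_simps)
  also have "\<dots> \<longleftrightarrow> tau e * (U F e - 2 * gg F e) = tau e' * U F e' * (tau e * tau e' * ep e)"
    using d1nz by (simp only: mult_cancel_right of_real_eq_iff simp_thms)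
  also have "\<dots> \<longleftrightarrow> U F e - 2 * gg F e = ep e * U F e'"
    by (rule aux_sign[OF tau_pm[OF e] tau_pm[OF e']])
  finally show ?thesis unfolding e'_def .
qed

end



context ctx begin

lemma holo_iff: "(\<forall>v\<in>org ` E. sholo_at E rv org R c rho \<theta> a (\<lambda>z. exp (\<i> * of_real (pi / 4)) * F z) v)
   \<longleftrightarrow> (\<forall>e\<in>E. U F e - 2 * gg F e = ep e * U F (R e))"
proof -
  have "(\<forall>v\<in>org ` E. sholo_at E rv org R c rho \<theta> a (\<lambda>z. exp (\<i> * of_real (pi / 4)) * F z) v)
     \<longleftrightarrow> (\<forall>e\<in>E. Pr (exp (\<i> * of_real (pi / 4)) * F (zmid rv e)) (exp (- (\<i> * of_real ((pi / 2 + a e + \<theta> e) / 2))))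
        = Pr (exp (\<i> * of_real (pi / 4)) * F (zmid rv (R e))) (exp (- (\<i> * of_real ((pi / 2 + a (R e) - \<theta> (R e)) / 2))))
          * exp (\<i> * of_real ((beta rv R c rho e - \<theta> e - \<theta> (R e)) / 2)))"
    unfolding sholo_at_def by blast
  also have "\<dots> \<longleftrightarrow> (\<forall>e\<in>E. U F e - 2 * gg F e = ep e * U F (R e))"
    using hol by (intro ball_cong refl) blast
  finally show ?thesis .
qed

lemma Dd_iter: assumes w: "w \<in> E" and h: "\<forall>e\<in>E. Dd e = ep e * Dd (R e)"
  shows "Dd w = eb w k * Dd ((R ^^ k) w)"
proof (induction k)
  case 0 then show ?case by (simp add: eb_def)
next
  case (Suc k)
  have "Dd ((R ^^ k) w) = ep ((R ^^ k) w) * Dd ((R ^^ Suc k) w)"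
    using h Rk_in[OF w, of k] by simp
  moreover have "eb w (Suc k) = eb w k * ep ((R ^^ k) w)" by (simp add: eb_def)
  ultimately show ?case using Suc by (simp add: mult.assoc)
qed

lemma holo_T: "(\<forall>e\<in>E. U F e - 2 * gg F e = ep e * U F (R e)) \<longleftrightarrow> (\<forall>e\<in>E. T F e = U F e)"
proof
  assume h: "\<forall>e\<in>E. U F e - 2 * gg F e = ep e * U F (R e)"
  define Dd where "Dd e = T F e - U F e" for e
  have hD: "\<forall>e\<in>E. Dd e = ep e * Dd (R e)"
  proof
    fix e assume e: "e \<in> E"
    have "T F e - ep e * T F (R e) = 2 * gg F e" using Trec[OF e] .
    thus "Dd e = ep e * Dd (R e)" using h e unfolding Dd_def by (simp add: algebra_simps)
  qed
  show "\<forall>e\<in>E. T F e = U F e"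
  proof
    fix w assume w: "w \<in> E"
    have "Dd w = eb w (d w) * Dd ((R ^^ d w) w)" by (rule Dd_iter[OF w hD])
    hence "Dd w = - Dd w" using eb_d[OF w] cyc[OF w] by simp
    thus "T F w = U F w" unfolding Dd_def by simp
  qed
next
  assume h: "\<forall>e\<in>E. T F e = U F e"
  show "\<forall>e\<in>E. U F e - 2 * gg F e = ep e * U F (R e)"
  proof
    fix e assume e: "e \<in> E"
    have "T F e - ep e * T F (R e) = 2 * gg F e" using Trec[OF e] .
    moreover have "T F e = U F e" "T F (R e) = U F (R e)" using h e R_in[OF e] by auto
    ultimately show "U F e - 2 * gg F e = ep e * U F (R e)" by simp
  qed
qed

lemma KW_cong: assumes "\<forall>x\<in>E. f x = g x" "e \<in> E"
  shows "KW E rv org R c rho \<theta> f e = KW E rv org R c rho \<theta> g e"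
  unfolding KW_def using assms by (auto intro!: sum.cong)

lemma KW_scale: "KW E rv org R c rho \<theta> (\<lambda>x. k * f x) e = k * KW E rv org R c rho \<theta> f e"
  unfolding KW_def by (simp add: sum_distrib_left algebra_simps)

end

lemma Kast_real: "Kast rv R \<theta> wc ws wr (\<lambda>x. complex_of_real (g x)) e = complex_of_real (Kast rv R \<theta> wc ws wr g e)"
  unfolding Kast_def by simp

context ctx begin

lemma KW_Kast:
  assumes factor: "KW_factorization E rv org R c rho \<theta> Dh wc ws wr"
  shows "(\<forall>e\<in>E. KW E rv org R c rho \<theta> (Smap E rv \<theta> a F) e = 0)
     \<longleftrightarrow> (\<forall>e\<in>E. Kast rv R \<theta> wc ws wr (T F) e = 0)"
proof -
  define g where "g x = complex_of_real (T F x)" for x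
  define h where "h e' = g e' / Dh e' - q e' * (g (R e') / Dh (R e'))" for e'
  have hS: "\<forall>x\<in>E. h x = 2 * Smap E rv \<theta> a F x"
  proof
    fix x assume x: "x \<in> E"
    have DR: "Dh (R x) = of_real (ep x) * q x * Dh x" using Dh_R[OF x] eps_real[OF x] by simp
    have qnz: "q x \<noteq> 0" by (simp add: q_cis cis_neq_zero)
    have "q x * (g (R x) / Dh (R x)) = of_real (ep x) * g (R x) / Dh x"
    proof -
      have "q x * (g (R x) / Dh (R x)) = g (R x) / (of_real (ep x) * Dh x)"
        unfolding DR using qnz by (simp add: field_simps)
      also have "\<dots> = of_real (ep x) * g (R x) / Dh x"
        using ep_pm[OF x] by auto
      finally show ?thesis .
    qed
    note qeq = this
    have "h x = (g x - of_real (ep x) * g (R x)) * cnj (Dh x)"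
      unfolding h_def qeq by (simp add: divide_inverse Dh_inv[OF x] algebra_simps)
    also have "g x - of_real (ep x) * g (R x) = of_real (2 * gg F x)"
      unfolding g_def using Trec[OF x, of F] by (metis of_real_diff of_real_mult)
    finally show "h x = 2 * Smap E rv \<theta> a F x" using Smap_eq[OF x] by (simp add: gg_def)
  qed
  have KWh: "KW E rv org R c rho \<theta> h e = 2 * KW E rv org R c rho \<theta> (Smap E rv \<theta> a F) e" if e: "e \<in> E" for e
    using KW_cong[OF hS e] KW_scale by simp
  define kk where "kk x = Kast rv R \<theta> wc ws wr (T F) x" for x
  have fac: "KW E rv org R c rho \<theta> h e = of_real (kk e) / Dh e - \<i> * of_real (xw \<theta> e) * (of_real (kk (rv e)) / Dh (rv e))"
    if e: "e \<in> E" for e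
  proof -
    have f0: "\<forall>e\<in>E. KW E rv org R c rho \<theta> (\<lambda>e'. g e' / Dh e' - q e' * (g (R e') / Dh (R e'))) e
        = Kast rv R \<theta> wc ws wr g e / Dh e - \<i> * of_real (xw \<theta> e) * (Kast rv R \<theta> wc ws wr g (rv e) / Dh (rv e))"
      using factor unfolding KW_factorization_def by (rule spec)
    have "KW E rv org R c rho \<theta> h e
        = Kast rv R \<theta> wc ws wr g e / Dh e - \<i> * of_real (xw \<theta> e) * (Kast rv R \<theta> wc ws wr g (rv e) / Dh (rv e))"
      using f0 e unfolding h_def by blast
    thus ?thesis unfolding g_def kk_def Kast_real .
  qed
  show ?thesis
  proof
    assume H: "\<forall>e\<in>E. KW E rv org R c rho \<theta> (Smap E rv \<theta> a F) e = 0"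
    have Z: "of_real (kk e) / Dh e = \<i> * of_real (xw \<theta> e) * (of_real (kk (rv e)) / Dh (rv e))" if e: "e \<in> E" for e
      using fac[OF e] KWh[OF e] H e by simp
    show "\<forall>e\<in>E. Kast rv R \<theta> wc ws wr (T F) e = 0"
    proof
      fix e assume e: "e \<in> E"
      define A where "A = complex_of_real (kk e) / Dh e"
      define B where "B = complex_of_real (kk (rv e)) / Dh (rv e)"
      have xr: "xw \<theta> (rv e) = xw \<theta> e" unfolding xw_def using th_rv[OF e] by simp
      have "A = \<i> * of_real (xw \<theta> e) * B" unfolding A_def B_def using Z[OF e] .
      moreover have "B = \<i> * of_real (xw \<theta> e) * A" unfolding A_def B_def using Z[OF rv_in[OF e]] xr e by simp
      ultimately have "A = - (of_real (xw \<theta> e) ^ 2) * A" by (simp add: power2_eq_square algebra_simps)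
      hence "A * (1 + of_real (xw \<theta> e ^ 2)) = 0" by (simp add: algebra_simps) (metis add.left_inverse)
      moreover have "(1 + complex_of_real (xw \<theta> e ^ 2)) \<noteq> 0"
      proof
        assume "1 + complex_of_real (xw \<theta> e ^ 2) = 0"
        hence "complex_of_real (1 + xw \<theta> e ^ 2) = 0" by simp
        hence "1 + xw \<theta> e ^ 2 = 0" by (simp only: of_real_eq_0_iff)
        thus False by (smt (verit) zero_le_power2)
      qed
      ultimately have "A = 0" by simp
      thus "Kast rv R \<theta> wc ws wr (T F) e = 0" unfolding A_def kk_def using Dh_nz[OF e] by simp
    qed
  next
    assume H: "\<forall>e\<in>E. Kast rv R \<theta> wc ws wr (T F) e = 0"
    show "\<forall>e\<in>E. KW E rv org R c rho \<theta> (Smap E rv \<theta> a F) e = 0"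
    proof
      fix e assume e: "e \<in> E"
      have "KW E rv org R c rho \<theta> h e = 0" using fac[OF e] H e rv_in[OF e] unfolding kk_def by simp
      thus "KW E rv org R c rho \<theta> (Smap E rv \<theta> a F) e = 0" using KWh[OF e] by simp
    qed
  qed
qed

end



lemma Pr_add: "Pr (x + y) u = Pr x u + Pr y u"
  unfolding Pr_def by (simp add: algebra_simps add_divide_distrib)
lemma Pr_scale: "Pr (complex_of_real t * x) u = complex_of_real t * Pr x u"
  unfolding Pr_def by (simp add: algebra_simps)

lemma Smap_add: "Smap E rv \<theta> a (\<lambda>z. x z + y z) = (\<lambda>w. Smap E rv \<theta> a x w + Smap E rv \<theta> a y w)"
  by (rule ext) (simp add: Smap_def Pr_add algebra_simps)
lemma Smap_scale: "Smap E rv \<theta> a (\<lambda>z. t *\<^sub>R x z) = (\<lambda>w. t *\<^sub>R Smap E rv \<theta> a x w)"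
  by (rule ext) (simp add: Smap_def scaleR_conv_of_real Pr_scale algebra_simps)

lemma Re_scale: "Re (a * (complex_of_real t * x)) = t * Re (a * x)"
  by (metis Re_ofr mult.left_commute)

lemma Tmap_add: "Tmap E rv org R c rho \<theta> Dh (\<lambda>z. x z + y z)
   = (\<lambda>w. Tmap E rv org R c rho \<theta> Dh x w + Tmap E rv org R c rho \<theta> Dh y w)"
  by (rule ext) (auto simp add: Tmap_def distrib_left sum.distrib)
lemma Tmap_scale: "Tmap E rv org R c rho \<theta> Dh (\<lambda>z. t *\<^sub>R x z) = (\<lambda>w. t *\<^sub>R Tmap E rv org R c rho \<theta> Dh x w)"
proof (rule ext)
  fix w
  show "Tmap E rv org R c rho \<theta> Dh (\<lambda>z. t *\<^sub>R x z) w = t *\<^sub>R Tmap E rv org R c rho \<theta> Dh x w"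
  proof (cases "w \<in> E")
    case True
    then show ?thesis unfolding Tmap_def scaleR_conv_of_real Re_scale real_scaleR_def
      by (simp only: if_True sum_distrib_left) simp
  next
    case False
    then show ?thesis unfolding Tmap_def by simp
  qed
qed

lemma T'map_add: "T'map E rv org R c rho \<theta> Dh (\<lambda>z. x z + y z)
   = (\<lambda>w. T'map E rv org R c rho \<theta> Dh x w + T'map E rv org R c rho \<theta> Dh y w)"
  unfolding T'map_def Tmap_add by (simp add: algebra_simps)
lemma T'map_scale: "T'map E rv org R c rho \<theta> Dh (\<lambda>z. t *\<^sub>R x z) = (\<lambda>w. t *\<^sub>R T'map E rv org R c rho \<theta> Dh x w)"
  unfolding T'map_def Tmap_scale by (simp add: scaleR_conv_of_real algebra_simps)

context ctx begin

lemma r_inj: assumes F: "F \<in> DiamSp E rv" and G: "G \<in> DiamSp E rv" and h: "\<forall>e\<in>E. r F e = r G e"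
  shows "F = G"
proof
  fix z show "F z = G z"
  proof (cases "z \<in> Diam E rv")
    case True
    then obtain e where e: "e \<in> E" and z: "z = zmid rv e" unfolding Diam_def by blast
    have "Dh e * F z = Dh e * G z"
      using Dh_F[OF e, of F] Dh_F[OF e, of G] h e rv_in[OF e] z by simp
    thus ?thesis using Dh_nz[OF e] by simp
  next
    case False then show ?thesis using F G unfolding DiamSp_def by simp
  qed
qed

definition Fr where "Fr \<rho> z = (if z \<in> Diam E rv then
   (let e = SOME e. e \<in> E \<and> z = zmid rv e in
      (complex_of_real (\<rho> e) - \<i> * complex_of_real (sg e * \<rho> (rv e))) * cnj (Dh e)) else 0)"

lemma Fr_in: "Fr \<rho> \<in> DiamSp E rv" unfolding DiamSp_def Fr_def by auto

lemma Fr_r: assumes e: "e \<in> E" shows "r (Fr \<rho>) e = \<rho> e"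
proof -
  have zin: "zmid rv e \<in> Diam E rv" using e unfolding Diam_def by blast
  define e0 where "e0 = (SOME e0. e0 \<in> E \<and> zmid rv e = zmid rv e0)"
  have "\<exists>e0. e0 \<in> E \<and> zmid rv e = zmid rv e0" using e by blast
  hence e0: "e0 \<in> E" "zmid rv e = zmid rv e0" unfolding e0_def by (metis (mono_tags, lifting) someI_ex)+
  have Fz: "Fr \<rho> (zmid rv e) = (complex_of_real (\<rho> e0) - \<i> * complex_of_real (sg e0 * \<rho> (rv e0))) * cnj (Dh e0)"
    unfolding Fr_def using zin e0_def by (simp add: Let_def)
  have "e0 = e \<or> e0 = rv e" using e0(2) unfolding zmid_def by (metis doubleton_eq_iff)
  thus ?thesis
  proof
    assume "e0 = e"
    hence "Dh e * Fr \<rho> (zmid rv e) = (complex_of_real (\<rho> e) - \<i> * complex_of_real (sg e * \<rho> (rv e))) * (Dh e * cnj (Dh e))"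
      using Fz by (simp only: ac_simps)
    hence "Dh e * Fr \<rho> (zmid rv e) = complex_of_real (\<rho> e) - \<i> * complex_of_real (sg e * \<rho> (rv e))"
      using Dh_cnj[OF e] by simp
    thus ?thesis unfolding r_def by simp
  next
    assume h: "e0 = rv e"
    have cd: "cnj (Dh (rv e)) = - \<i> * of_real (sg e) * cnj (Dh e)" using Dh_rv[OF e] by simp
    have "Dh e * Fr \<rho> (zmid rv e) = (complex_of_real (\<rho> (rv e)) - \<i> * complex_of_real (sg (rv e) * \<rho> e)) * (- \<i> * of_real (sg e)) * (Dh e * cnj (Dh e))"
      unfolding Fz h rv_rv[OF e] cd by (simp only: ac_simps)
    also have "\<dots> = (complex_of_real (\<rho> (rv e)) - \<i> * complex_of_real (- sg e * \<rho> e)) * (- \<i> * of_real (sg e)) * (Dh e * cnj (Dh e))"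
      unfolding sg_rv[OF e] ..
    also have "\<dots> = complex_of_real (\<rho> e) * of_real (sg e * sg e) - \<i> * of_real (sg e * \<rho> (rv e))"
      using Dh_cnj[OF e] by (simp add: algebra_simps)
    finally show ?thesis unfolding r_def using sg_sq[OF e] by simp
  qed
qed

lemma expm: "e \<in> E \<Longrightarrow> exp (- (\<i> * complex_of_real (a e / 2))) = of_real (tau e) * cnj (Dh e)"
  using tau_prop by (metis cis_cnj complex_cnj_complex_of_real complex_cnj_mult exp_mcis)

lemma tau_sq: "e \<in> E \<Longrightarrow> tau e * tau e = 1" using tau_pm by fastforce

lemma S_iso: "rlin_iso (Smap E rv \<theta> a) (DiamSp E rv) (Lsp E a)"
  unfolding rlin_iso_def
proof (intro conjI ballI allI bij_betw_imageI)
  show "inj_on (Smap E rv \<theta> a) (DiamSp E rv)"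
  proof (rule inj_onI)
    fix F G assume F: "F \<in> DiamSp E rv" and G: "G \<in> DiamSp E rv" and eq: "Smap E rv \<theta> a F = Smap E rv \<theta> a G"
    show "F = G"
    proof (rule r_inj[OF F G], rule ballI)
      fix e assume e: "e \<in> E"
      have "of_real (s e * r F e) * cnj (Dh e) = of_real (s e * r G e) * cnj (Dh e)"
        using eq Smap_eq[OF e] by metis
      hence "s e * r F e = s e * r G e" using Dh_nz[OF e] by simp
      thus "r F e = r G e" using s_pos[OF e] by simp
    qed
  qed
  show "Smap E rv \<theta> a ` DiamSp E rv = Lsp E a"
  proof
    show "Smap E rv \<theta> a ` DiamSp E rv \<subseteq> Lsp E a"
    proof
      fix f assume "f \<in> Smap E rv \<theta> a ` DiamSp E rv"
      then obtain F where fF: "f = Smap E rv \<theta> a F" by blast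
      have A: "\<exists>r. f e = exp (- (\<i> * complex_of_real (a e / 2))) * complex_of_real r" if e: "e \<in> E" for e
      proof -
        have tt: "complex_of_real (tau e) * complex_of_real (tau e) = 1" using tau_sq[OF e] by (metis of_real_1 of_real_mult)
        have "Smap E rv \<theta> a F e = exp (- (\<i> * complex_of_real (a e / 2))) * of_real (tau e * s e * r F e)"
          unfolding Smap_eq[OF e] expm[OF e] using tt by (simp add: algebra_simps)
        thus ?thesis unfolding fF by blast
      qed
      have B: "f e = 0" if "e \<notin> E" for e using that unfolding fF by (simp add: Smap_def)
      show "f \<in> Lsp E a" unfolding Lsp_def using A B by blast
    qed
    show "Lsp E a \<subseteq> Smap E rv \<theta> a ` DiamSp E rv"
    proof
      fix f assume f: "f \<in> Lsp E a"
      define \<rho> where "\<rho> e = Re (f e * Dh e) / s e" for e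
      have "Smap E rv \<theta> a (Fr \<rho>) = f"
      proof
        fix e show "Smap E rv \<theta> a (Fr \<rho>) e = f e"
        proof (cases "e \<in> E")
          case True
          obtain r0 where r0: "f e = exp (- (\<i> * complex_of_real (a e / 2))) * of_real r0"
            using f True unfolding Lsp_def by blast
          have f2: "f e = of_real (tau e) * cnj (Dh e) * of_real r0" by (simp only: r0 expm[OF True])
          have "f e * Dh e = of_real (tau e * r0) * (Dh e * cnj (Dh e))"
            unfolding f2 by (simp only: of_real_mult ac_simps)
          hence fD: "f e * Dh e = of_real (tau e * r0)" using Dh_cnj[OF True] by simp
          have "Smap E rv \<theta> a (Fr \<rho>) e = of_real (Re (f e * Dh e)) * cnj (Dh e)"
            using Smap_eq[OF True] Fr_r[OF True] s_pos[OF True] unfolding \<rho>_def by simp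
          also have "\<dots> = (f e * Dh e) * cnj (Dh e)" unfolding fD by simp
          also have "\<dots> = f e" using Dh_cnj[OF True] by (simp add: mult.assoc)
          finally show ?thesis .
        next
          case False then show ?thesis using f unfolding Lsp_def Smap_def by simp
        qed
      qed
      thus "f \<in> Smap E rv \<theta> a ` DiamSp E rv" using Fr_in by blast
    qed
  qed
qed (simp_all add: Smap_add Smap_scale)

lemma T_inj: "inj_on (T) (DiamSp E rv)"
proof (rule inj_onI)
  fix F G assume F: "F \<in> DiamSp E rv" and G: "G \<in> DiamSp E rv" and eq: "T F = T G"
  show "F = G"
  proof (rule r_inj[OF F G], rule ballI)
    fix e assume e: "e \<in> E"
    have "2 * gg F e = 2 * gg G e" using Trec[OF e, of F] Trec[OF e, of G] eq by simp
    thus "r F e = r G e" using s_pos[OF e] unfolding gg_def by simp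
  qed
qed

lemma T_iso: "rlin_iso (T) (DiamSp E rv) (RB E)"
  unfolding rlin_iso_def
proof (intro conjI ballI allI bij_betw_imageI T_inj)
  show "T ` DiamSp E rv = RB E"
  proof
    show "T ` DiamSp E rv \<subseteq> RB E" by (auto simp: RB_def Tmap_def)
    show "RB E \<subseteq> T ` DiamSp E rv"
    proof
      fix g assume g: "g \<in> RB E"
      define \<rho> where "\<rho> e = (g e - ep e * g (R e)) / (2 * s e)" for e
      have "T (Fr \<rho>) = g"
      proof
        fix w show "T (Fr \<rho>) w = g w"
        proof (cases "w \<in> E")
          case True
          have "T (Fr \<rho>) w = (\<Sum>k<d w. eb w k * gg (Fr \<rho>) ((R ^^ k) w))" by (rule Tmap_eq[OF True])
          also have "\<dots> = (\<Sum>k<d w. (eb w k * g ((R ^^ k) w) - eb w (Suc k) * g ((R ^^ Suc k) w)) / 2)"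
          proof (rule sum.cong[OF refl])
            fix k assume "k \<in> {..<d w}"
            have x: "(R ^^ k) w \<in> E" by (rule Rk_in[OF True])
            have gx: "gg (Fr \<rho>) ((R ^^ k) w) = (g ((R ^^ k) w) - ep ((R ^^ k) w) * g ((R ^^ Suc k) w)) / 2"
              unfolding gg_def Fr_r[OF x] \<rho>_def using s_pos[OF x] by simp
            have ebS: "eb w (Suc k) = eb w k * ep ((R ^^ k) w)" by (simp add: eb_def)
            show "eb w k * gg (Fr \<rho>) ((R ^^ k) w) = (eb w k * g ((R ^^ k) w) - eb w (Suc k) * g ((R ^^ Suc k) w)) / 2"
              by (simp only: gx ebS) (simp add: field_simps)
          qed
          also have "\<dots> = (\<Sum>k<d w. eb w k * g ((R ^^ k) w) - eb w (Suc k) * g ((R ^^ Suc k) w)) / 2"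
            by (simp add: sum_divide_distrib)
          also have "\<dots> = (eb w 0 * g ((R ^^ 0) w) - eb w (d w) * g ((R ^^ d w) w)) / 2"
            by (simp only: sum_lessThan_telescope'[where f = "\<lambda>k. eb w k * g ((R ^^ k) w)"])
          also have "\<dots> = g w" using eb_d[OF True] cyc[OF True] by (simp add: eb_def)
          finally show ?thesis .
        next
          case False then show ?thesis using g by (simp add: RB_def Tmap_def)
        qed
      qed
      thus "g \<in> T ` DiamSp E rv" using Fr_in by blast
    qed
  qed
qed (simp_all add: Tmap_add Tmap_scale)

lemma T'_iso: "rlin_iso (T'map E rv org R c rho \<theta> Dh) (DiamSp E rv) (T'map E rv org R c rho \<theta> Dh ` DiamSp E rv)"
  unfolding rlin_iso_def
proof (intro conjI ballI allI bij_betw_imageI refl)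
  show "inj_on (T'map E rv org R c rho \<theta> Dh) (DiamSp E rv)"
  proof (rule inj_onI)
    fix F G assume F: "F \<in> DiamSp E rv" and G: "G \<in> DiamSp E rv" and eq: "T'map E rv org R c rho \<theta> Dh F = T'map E rv org R c rho \<theta> Dh G"
    have "T F = T G"
    proof
      fix w have "T'map E rv org R c rho \<theta> Dh F w = T'map E rv org R c rho \<theta> Dh G w" using eq by simp
      thus "T F w = T G w" unfolding T'map_def by simp
    qed
    thus "F = G" using T_inj F G by (meson inj_onD)
  qed
qed (simp_all add: T'map_add T'map_scale)

end



lemma dbar_eq:
  fixes t :: "'e \<Rightarrow> real"
  assumes thr: "\<theta> (rv e) = \<theta> e"
  shows "dbar rv R \<theta> wc ws wr (\<lambda>x. exp (\<i> * of_real (\<theta> x / 2)) * of_real (t x)) e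
    = inverse (of_real (sin (2 * \<theta> e))) * (cis (\<theta> e / 2) * of_real (Kast rv R \<theta> wc ws wr t e))"
proof -
  define C where "C = cis (\<theta> e / 2)"
  have cc: "cis (\<theta> e) * cis (- ((\<theta> e + \<theta> (R e)) / 2)) * cis (\<theta> (R e) / 2) = C"
    unfolding C_def by (simp only: cis_mult) (rule arg_cong[where f=cis], simp add: field_simps)
  have t3: "cis (\<theta> e) * (- cis (- ((\<theta> e + \<theta> (R e)) / 2)) * of_real (wr e)) * (cis (\<theta> (R e) / 2) * of_real (t (R e)))
      = - (C * of_real (wr e * t (R e)))"
  proof -
    have "cis (\<theta> e) * (- cis (- ((\<theta> e + \<theta> (R e)) / 2)) * of_real (wr e)) * (cis (\<theta> (R e) / 2) * of_real (t (R e)))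
        = - ((cis (\<theta> e) * cis (- ((\<theta> e + \<theta> (R e)) / 2)) * cis (\<theta> (R e) / 2)) * of_real (wr e * t (R e)))"
      by (simp only: of_real_mult mult_minus_left mult_minus_right ac_simps)
    thus ?thesis unfolding cc .
  qed
  have "dbar rv R \<theta> wc ws wr (\<lambda>x. exp (\<i> * of_real (\<theta> x / 2)) * of_real (t x)) e
     = inverse (of_real (sin (2 * \<theta> e))) *
       (of_real (wc e) * of_real (cos (\<theta> e)) * (C * of_real (t e))
        + \<i> * (- \<i> * of_real (ws e)) * of_real (sin (\<theta> e)) * (C * of_real (t (rv e)))
        - cis (\<theta> e) * (- cis (- ((\<theta> e + \<theta> (R e)) / 2)) * of_real (wr e)) * (cis (\<theta> (R e) / 2) * of_real (t (R e))))"
    unfolding dbar_def Let_def C_def exp_cis exp_mcis thr ..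
  also have "\<dots> = inverse (of_real (sin (2 * \<theta> e))) * (C * of_real (Kast rv R \<theta> wc ws wr t e))"
    unfolding t3 Kast_def by (simp add: algebra_simps)
  finally show ?thesis unfolding C_def .
qed


theorem theorem4p3:
  fixes E :: "'e set" and rv R :: "'e \<Rightarrow> 'e" and org :: "'e \<Rightarrow> 'v"
    and \<theta> a rho c :: "'e \<Rightarrow> real" and Dh :: "'e \<Rightarrow> complex"
    and wc ws wr :: "'e \<Rightarrow> real"
  assumes graph: "rotation_system E rv org R"
    and weights: "weights_ok E rv \<theta>"
    and angles: "angle_data E rv org R c rho a"
    and kast: "kasteleyn E rv R wc ws wr"
    and sqrtD: "\<forall>e\<in>E. Dh e ^ 2 = exp (\<i> * of_real (a e))"
    and factor: "KW_factorization E rv org R c rho \<theta> Dh wc ws wr"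
  shows "rlin_iso (Smap E rv \<theta> a) (DiamSp E rv) (Lsp E a)
    \<and> rlin_iso (Tmap E rv org R c rho \<theta> Dh) (DiamSp E rv) (RB E)
    \<and> rlin_iso (T'map E rv org R c rho \<theta> Dh) (DiamSp E rv)
         (T'map E rv org R c rho \<theta> Dh ` DiamSp E rv)
    \<and> (\<forall>F\<in>DiamSp E rv.
         ((\<forall>v\<in>org ` E. sholo_at E rv org R c rho \<theta> a (\<lambda>z. exp (\<i> * of_real (pi / 4)) * F z) v)
            \<longleftrightarrow> (\<forall>e\<in>E. KW E rv org R c rho \<theta> (Smap E rv \<theta> a F) e = 0))
       \<and> ((\<forall>e\<in>E. KW E rv org R c rho \<theta> (Smap E rv \<theta> a F) e = 0)
            \<longleftrightarrow> (\<forall>e\<in>E. Kast rv R \<theta> wc ws wr (Tmap E rv org R c rho \<theta> Dh F) e = 0)))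
    \<and> (isoradial E rv org R \<theta> \<longrightarrow>
         (\<forall>F\<in>DiamSp E rv.
            (\<forall>e\<in>E. Kast rv R \<theta> wc ws wr (Tmap E rv org R c rho \<theta> Dh F) e = 0)
            \<longleftrightarrow> (\<forall>e\<in>E. dbar rv R \<theta> wc ws wr (T'map E rv org R c rho \<theta> Dh F) e = 0)))"
proof -
  interpret ctx E rv R org \<theta> a rho c Dh
    using graph weights angles sqrtD by (simp add: ctx_def)
  have P4: "\<forall>F\<in>DiamSp E rv.
         ((\<forall>v\<in>org ` E. sholo_at E rv org R c rho \<theta> a (\<lambda>z. exp (\<i> * of_real (pi / 4)) * F z) v)
            \<longleftrightarrow> (\<forall>e\<in>E. KW E rv org R c rho \<theta> (Smap E rv \<theta> a F) e = 0))
       \<and> ((\<forall>e\<in>E. KW E rv org R c rho \<theta> (Smap E rv \<theta> a F) e = 0)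
            \<longleftrightarrow> (\<forall>e\<in>E. Kast rv R \<theta> wc ws wr (Tmap E rv org R c rho \<theta> Dh F) e = 0))"
    using holo_iff holo_T KW_iff KW_Kast[OF factor] by blast
  have P5: "isoradial E rv org R \<theta> \<longrightarrow>
         (\<forall>F\<in>DiamSp E rv.
            (\<forall>e\<in>E. Kast rv R \<theta> wc ws wr (Tmap E rv org R c rho \<theta> Dh F) e = 0)
            \<longleftrightarrow> (\<forall>e\<in>E. dbar rv R \<theta> wc ws wr (T'map E rv org R c rho \<theta> Dh F) e = 0))"
  proof (intro impI ballI)
    fix F assume iso: "isoradial E rv org R \<theta>"
    have T'e: "T'map E rv org R c rho \<theta> Dh F = (\<lambda>x. exp (\<i> * of_real (\<theta> x / 2)) * of_real (T F x))"
      by (rule ext) (simp add: T'map_def)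
    have eq: "dbar rv R \<theta> wc ws wr (T'map E rv org R c rho \<theta> Dh F) e = 0 \<longleftrightarrow> Kast rv R \<theta> wc ws wr (T F) e = 0"
      if e: "e \<in> E" for e
    proof -
      have "0 < \<theta> e" "\<theta> e < pi / 2" using iso e unfolding isoradial_def by auto
      hence "0 < sin (2 * \<theta> e)" by (intro sin_gt_zero) auto
      hence nz: "inverse (complex_of_real (sin (2 * \<theta> e))) \<noteq> 0" by simp
      have cz: "cis (\<theta> e / 2) \<noteq> 0" by (simp add: cis_neq_zero)
      show ?thesis unfolding T'e dbar_eq[where \<theta>=\<theta> and rv=rv and e=e, OF th_rv[OF e]] using nz cz by simp
    qed
    show "(\<forall>e\<in>E. Kast rv R \<theta> wc ws wr (Tmap E rv org R c rho \<theta> Dh F) e = 0)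
            \<longleftrightarrow> (\<forall>e\<in>E. dbar rv R \<theta> wc ws wr (T'map E rv org R c rho \<theta> Dh F) e = 0)"
      using eq by blast
  qed
  show ?thesis using S_iso T_iso T'_iso P4 P5 by blast
qed

end
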